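(* For $d \ge 1$, let $X$ and $Y$ be independent random vectors uniformly distributed on the closed unit ball $B(0,1)$ of $\mathbb{R}^d$, and let $w_d = \mathbb{P}\{\|X - Y\| \le 1\}$ (Euclidean norm). Then $$w_d = \frac{3}{2}\, \mathbb{P}\left\{ \beta\left(\tfrac12, \tfrac{d+1}{2}\right) \ge \tfrac14 \right\},$$ where $\beta(a,b)$ denotes a beta random variable with shape parameters $a,b$. Moreover, the sequence $(w_d)_{d\ge1}$ is strictly decreasing and $w_d \to 0$ as $d \to \infty$. *)

theory Defs
  imports "HOL-Probability.Probability"
begin

text \<open>Lebesgue measure on R^d, with R^d represented as functions on the index set {..<d}
  (PiM gives the value undefined outside the index set).\<close>
definition lebesgue_d :: "nat \<Rightarrow> (nat \<Rightarrow> real) measure" where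
  "lebesgue_d d = PiM {..<d} (\<lambda>_. lborel)"

definition enorm_d :: "nat \<Rightarrow> (nat \<Rightarrow> real) \<Rightarrow> real" where
  "enorm_d d x = sqrt (\<Sum>i<d. (x i)^2)"

definition unit_ball_d :: "nat \<Rightarrow> (nat \<Rightarrow> real) set" where
  "unit_ball_d d = {x \<in> space (lebesgue_d d). enorm_d d x \<le> 1}"

definition unif_ball :: "nat \<Rightarrow> (nat \<Rightarrow> real) measure" where
  "unif_ball d = uniform_measure (lebesgue_d d) (unit_ball_d d)"

definition w :: "nat \<Rightarrow> real" where
  "w d = measure (unif_ball d \<Otimes>\<^sub>M unif_ball d)
     {(x, y) \<in> space (unif_ball d \<Otimes>\<^sub>M unif_ball d). enorm_d d (\<lambda>i. x i - y i) \<le> 1}"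

definition beta_density :: "real \<Rightarrow> real \<Rightarrow> real \<Rightarrow> real" where
  "beta_density a b t =
     (if 0 < t \<and> t < 1 then t powr (a - 1) * (1 - t) powr (b - 1) / Beta a b else 0)"

definition beta_distr :: "real \<Rightarrow> real \<Rightarrow> real measure" where
  "beta_distr a b = density lborel (\<lambda>t. ennreal (beta_density a b t))"

end

theory Submission
  imports Defs
begin


definition ff :: "nat \<Rightarrow> real \<Rightarrow> real" where "ff n t = sqrt (1 - t\<^sup>2) ^ n"
definition KK :: "nat \<Rightarrow> real \<Rightarrow> real" where "KK n u = integral {-2..u} (ff n)"

lemma ff_cont[continuous_intros]: "continuous_on S (ff n)"
  unfolding ff_def by (intro continuous_intros)

lemma ff_nonneg: "\<bar>t\<bar> \<le> 1 \<Longrightarrow> ff n t \<ge> 0"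
  unfolding ff_def by (simp add: abs_square_le_1)

lemma KK_deriv: "-2 < u \<Longrightarrow> u < 2 \<Longrightarrow> (KK n has_real_derivative ff n u) (at u)"
proof -
  assume u: "-2 < u" "u < 2"
  have "((\<lambda>x. integral {-2..x} (ff n)) has_real_derivative ff n u) (at u within {-2..2})"
    by (rule integral_has_real_derivative) (use u in \<open>auto intro: continuous_intros\<close>)
  moreover have "at u within {-2..2} = at u"
    by (rule at_within_interior) (use u in auto)
  ultimately show ?thesis unfolding KK_def by simp
qed

lemma KK_chain:
  "(g has_real_derivative g') (at x) \<Longrightarrow> -2 < g x \<Longrightarrow> g x < 2 \<Longrightarrow>
   ((\<lambda>x. KK n (g x)) has_real_derivative ff n (g x) * g') (at x)"
  using DERIV_chain2[OF KK_deriv] by blast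

lemma KK_integral: "-2 \<le> a \<Longrightarrow> a \<le> b \<Longrightarrow> b \<le> 2 \<Longrightarrow> integral {a..b} (ff n) = KK n b - KK n a"
proof -
  assume ab: "-2 \<le> a" "a \<le> b" "b \<le> 2"
  have "integral {-2..a} (ff n) + integral {a..b} (ff n) = integral {-2..b} (ff n)"
    by (rule Henstock_Kurzweil_Integration.integral_combine) (use ab in \<open>auto intro!: integrable_continuous_real continuous_intros\<close>)
  thus ?thesis unfolding KK_def by simp
qed

lemma KK_cont: "continuous_on {-1..1} (KK n)"
  by (rule continuous_at_imp_continuous_on) (auto intro!: DERIV_isCont[OF KK_deriv])

lemma KK_d1: "0 \<le> s \<Longrightarrow> s \<le> 1 \<Longrightarrow> ((\<lambda>s. KK n (s/2)) has_real_derivative ff n (s/2) * (1/2)) (at s)"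
  by (rule DERIV_chain2[OF KK_deriv, of "\<lambda>s. s/2"]) (auto intro!: derivative_eq_intros)

lemma KK_d2: "0 \<le> s \<Longrightarrow> s \<le> 1 \<Longrightarrow> ((\<lambda>s. KK n (1 - s\<^sup>2/2)) has_real_derivative ff n (1 - s\<^sup>2/2) * (-s)) (at s)"
proof -
  assume s: "0 \<le> s" "s \<le> 1"
  have "s\<^sup>2 \<le> 1" using s by (simp add: power_le_one)
  moreover have d: "((\<lambda>s. 1 - s\<^sup>2/2) has_real_derivative (-s)) (at s)"
    by (auto intro!: derivative_eq_intros)
  moreover have "0 \<le> s\<^sup>2" by simp
  ultimately have "-2 < 1 - s\<^sup>2/2" "1 - s\<^sup>2/2 < 2" by linarith+
  thus ?thesis using d
    by (intro DERIV_chain2[OF KK_deriv]) auto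
qed

lemma ff_half: "0 \<le> s \<Longrightarrow> ff n (1 - s\<^sup>2/2) = s ^ n * ff n (s/2)"
proof -
  assume s: "0 \<le> s"
  have "1 - (1 - s\<^sup>2/2)\<^sup>2 = s\<^sup>2 * (1 - (s/2)\<^sup>2)" by (simp add: power2_eq_square field_simps)
  hence "sqrt (1 - (1 - s\<^sup>2/2)\<^sup>2) = s * sqrt (1 - (s/2)\<^sup>2)"
    using s by (simp add: real_sqrt_mult)
  thus ?thesis unfolding ff_def by (simp add: power_mult_distrib)
qed

lemma calc_main:
  "((\<lambda>s. real (Suc n) * s ^ n * (KK n 1 - KK n (s/2))) has_integral
     (3/2) * (KK n 1 - KK n (1/2))) {0..1}"
proof -
  define F where "F s = s ^ Suc n * (KK n 1 - KK n (s/2)) + (1/2) * (KK n 1 - KK n (1 - s\<^sup>2/2))" for s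
  have "((\<lambda>s. real (Suc n) * s ^ n * (KK n 1 - KK n (s/2))) has_integral (F 1 - F 0)) {0..1}"
  proof (rule fundamental_theorem_of_calculus)
    fix s :: real assume s: "s \<in> {0..1}"
    have "(F has_real_derivative
       (real (Suc n) * s ^ n * (KK n 1 - KK n (s/2)) + s ^ Suc n * (- (ff n (s/2) * (1/2)))
        + (1/2) * (- (ff n (1 - s\<^sup>2/2) * (- (2 * s) / 2))))) (at s)"
      unfolding F_def using s
      apply (intro DERIV_cong[OF DERIV_add[OF DERIV_mult[OF DERIV_power_Suc[OF DERIV_ident] DERIV_diff[OF DERIV_const KK_d1]]
         DERIV_cmult[OF DERIV_diff[OF DERIV_const KK_d2]]]])
      by (auto simp: algebra_simps)
    moreover have "real (Suc n) * s ^ n * (KK n 1 - KK n (s/2)) + s ^ Suc n * (- (ff n (s/2) * (1/2)))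
        + (1/2) * (- (ff n (1 - s\<^sup>2/2) * (- (2 * s) / 2))) = real (Suc n) * s ^ n * (KK n 1 - KK n (s/2))"
      using s by (simp add: ff_half algebra_simps)
    ultimately show "(F has_vector_derivative real (Suc n) * s ^ n * (KK n 1 - KK n (s/2))) (at s within {0..1})"
      by (auto simp: has_real_derivative_iff_has_vector_derivative intro: has_vector_derivative_at_within)
  qed simp
  moreover have "F 1 - F 0 = (3/2) * (KK n 1 - KK n (1/2))" unfolding F_def by (simp add: field_simps)
  ultimately show ?thesis by simp
qed

lemma powr_n_half: "0 < x \<Longrightarrow> x powr (real n / 2) = sqrt x ^ n"
  by (simp add: powr_half_sqrt_powr powr_realpow real_sqrt_power)

lemma beta_sub:
  assumes a: "0 \<le> a" "a \<le> 1"
  shows "((\<lambda>t. t powr (-1/2) * (1-t) powr (real n/2)) has_integral 2*(KK n 1 - KK n (sqrt a))) {a..1}"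
proof -
  have "((\<lambda>t. t powr (-1/2) * (1-t) powr (real n/2)) has_integral (2*KK n (sqrt 1) - 2*KK n (sqrt a))) {a..1}"
  proof (rule fundamental_theorem_of_calculus_interior)
    show "a \<le> 1" by fact
    have sq: "-1 \<le> sqrt x" if "0 \<le> x" for x :: real using real_sqrt_ge_zero[OF that] by linarith
    have "continuous_on {a..1} (\<lambda>t. KK n (sqrt t))"
      by (rule continuous_on_compose2[OF KK_cont]) (use a in \<open>auto intro!: continuous_intros sq\<close>)
    thus "continuous_on {a..1} (\<lambda>t. 2 * KK n (sqrt t))" by (intro continuous_intros)
  next
    fix t :: real assume t: "t \<in> {a<..<1}"
    hence t0: "0 < t" "t < 1" using a by auto
    have "sqrt t < 1" using t0 by simp
    hence "sqrt t < 2" by linarith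
    moreover have "-2 < sqrt t" using t0 by (smt (verit) real_sqrt_ge_zero)
    ultimately have "((\<lambda>t. 2 * KK n (sqrt t)) has_real_derivative 2 * (ff n (sqrt t) * (inverse (sqrt t) / 2))) (at t)"
      using t0 by (intro DERIV_cmult DERIV_chain2[OF KK_deriv DERIV_real_sqrt]) auto
    moreover have "2 * (ff n (sqrt t) * (inverse (sqrt t) / 2)) = t powr (-1/2) * (1-t) powr (real n/2)"
    proof -
      have "ff n (sqrt t) = sqrt (1 - t) ^ n" using t0 by (simp add: ff_def)
      moreover have "(1-t) powr (real n/2) = sqrt (1 - t) ^ n" using t0 by (simp add: powr_n_half)
      moreover have "t powr (-1/2) = inverse (sqrt t)"
        using t0 powr_minus[of t "1/2"] by (simp add: powr_half_sqrt)
      ultimately show ?thesis by simp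
    qed
    ultimately show "((\<lambda>t. 2 * KK n (sqrt t)) has_vector_derivative t powr (-1/2) * (1-t) powr (real n/2)) (at t)"
      by (simp add: has_real_derivative_iff_has_vector_derivative)
  qed
  thus ?thesis by (simp add: algebra_simps)
qed

lemma Beta_KK: "Beta (1/2) (real n/2 + 1) = 2*(KK n 1 - KK n 0)"
proof -
  have "((\<lambda>t. t powr (1/2 - 1) * (1 - t) powr (real n/2 + 1 - 1)) has_integral Beta (1/2) (real n/2 + 1)) {0..1}"
    by (rule has_integral_Beta_real) auto
  moreover have "(\<lambda>t::real. t powr (1/2 - 1) * (1 - t) powr (real n/2 + 1 - 1)) = (\<lambda>t. t powr (-1/2) * (1-t) powr (real n/2))"
    by (simp add: field_simps)
  ultimately have "((\<lambda>t. t powr (-1/2) * (1-t) powr (real n/2)) has_integral Beta (1/2) (real n/2 + 1)) {0..1}" by simp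
  from has_integral_unique[OF this beta_sub[of 0 n]] show ?thesis by simp
qed

lemma Beta_pos: "Beta (1/2) (real n/2 + 1) > 0"
  unfolding Beta_def by (intro divide_pos_pos mult_pos_pos Gamma_real_pos) auto

lemma J0_pos: "KK n 1 - KK n 0 > 0"
  using Beta_pos[of n] Beta_KK[of n] by simp

lemma beta_meas: "measure (beta_distr (1/2) ((real (Suc n) + 1) / 2)) {1/4..} = (KK n 1 - KK n (1/2)) / (KK n 1 - KK n 0)"
proof -
  define b where "b = (real (Suc n) + 1) / 2"
  have b: "b = real n/2 + 1" unfolding b_def by simp
  define B where "B = Beta (1/2) b"
  have Bpos: "B > 0" unfolding B_def b using Beta_pos .
  define g where "g t = t powr (-1/2) * (1-t) powr (real n/2)" for t :: real
  have "(g has_integral 2*(KK n 1 - KK n (1/2))) {1/4..1}"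
    using beta_sub[of "1/4" n] unfolding g_def by (simp add: real_sqrt_divide)
  hence int: "((\<lambda>t. g t / B) has_integral 2*(KK n 1 - KK n (1/2)) / B) {1/4..1}"
    by (rule has_integral_divide)
  have meas: "(\<lambda>t. ennreal (beta_density (1/2) b t)) \<in> borel_measurable lborel"
    unfolding beta_density_def by measurable
  have "emeasure (beta_distr (1/2) b) {1/4..} = (\<integral>\<^sup>+t. ennreal (beta_density (1/2) b t) * indicator {1/4..} t \<partial>lborel)"
    unfolding beta_distr_def using meas by (subst emeasure_density) auto
  also have "\<dots> = (\<integral>\<^sup>+t. ennreal (g t / B) * indicator {1/4..1} t \<partial>lborel)"
  proof (intro nn_integral_cong_AE)
    show "AE t in lborel. ennreal (beta_density (1/2) b t) * indicator {1/4..} t = ennreal (g t / B) * indicator {1/4..1} t"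
      using AE_lborel_singleton[of 1]
    proof eventually_elim
      case (elim t)
      show ?case
      proof (cases "t < 1/4 \<or> t > 1")
        case True thus ?thesis by (auto simp: indicator_def beta_density_def)
      next
        case False
        hence "1/4 \<le> t" "t < 1" using elim by auto
        thus ?thesis by (auto simp: indicator_def beta_density_def g_def B_def b)
      qed
    qed
  qed
  also have "\<dots> = ennreal (2*(KK n 1 - KK n (1/2)) / B)"
  proof (rule nn_integral_has_integral_lebesgue'[OF _ int])
    fix t :: real assume "t \<in> {1/4..1}"
    thus "0 \<le> g t / B" using Bpos unfolding g_def by auto
  qed
  finally have "emeasure (beta_distr (1/2) b) {1/4..} = ennreal (2*(KK n 1 - KK n (1/2)) / B)" .
  moreover have "KK n 1 - KK n (1/2) \<ge> 0"
  proof -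
    have "integral {1/2..1} (ff n) \<ge> 0"
      by (intro integral_nonneg integrable_continuous_real continuous_intros ff_nonneg) auto
    thus ?thesis using KK_integral[of "1/2" 1 n] by simp
  qed
  ultimately have "measure (beta_distr (1/2) b) {1/4..} = 2*(KK n 1 - KK n (1/2)) / B"
    using Bpos by (simp add: measure_def)
  also have "B = 2*(KK n 1 - KK n 0)" unfolding B_def b by (rule Beta_KK)
  also have "2*(KK n 1 - KK n (1/2)) / (2*(KK n 1 - KK n 0)) = (KK n 1 - KK n (1/2)) / (KK n 1 - KK n 0)"
    by (rule mult_divide_mult_cancel_left) simp
  finally show ?thesis unfolding b_def .
qed

lemma ff_int[intro]: "ff n integrable_on {a..b}"
  by (intro integrable_continuous_real continuous_intros)

lemma int_lower:
  fixes \<phi> :: "real \<Rightarrow> real"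
  assumes cont: "continuous_on {a..b} \<phi>" and ac: "a \<le> c" "c \<le> b"
    and nn: "\<And>t. t \<in> {a..b} \<Longrightarrow> 0 \<le> \<phi> t" and lb: "\<And>t. t \<in> {a..c} \<Longrightarrow> \<delta> \<le> \<phi> t"
  shows "(c - a) * \<delta> \<le> integral {a..b} \<phi>"
proof -
  have i1: "\<phi> integrable_on {a..c}" "\<phi> integrable_on {c..b}"
    using cont ac by (auto intro!: integrable_continuous_real elim: continuous_on_subset)
  have "integral {a..c} \<phi> + integral {c..b} \<phi> = integral {a..b} \<phi>"
    using ac cont by (intro Henstock_Kurzweil_Integration.integral_combine integrable_continuous_real) auto
  moreover have "0 \<le> integral {c..b} \<phi>" using i1 nn ac by (intro integral_nonneg) auto
  moreover have "integral {a..c} (\<lambda>_. \<delta>) \<le> integral {a..c} \<phi>"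
    using i1 lb by (intro integral_le) auto
  moreover have "integral {a..c} (\<lambda>_. \<delta>) = (c - a) * \<delta>" using ac by simp
  ultimately show ?thesis by linarith
qed

lemma int_upper:
  fixes \<phi> :: "real \<Rightarrow> real"
  assumes cont: "continuous_on {a..b} \<phi>" and ab: "a \<le> b"
    and ub: "\<And>t. t \<in> {a..b} \<Longrightarrow> \<phi> t \<le> \<delta>"
  shows "integral {a..b} \<phi> \<le> (b - a) * \<delta>"
proof -
  have "integral {a..b} \<phi> \<le> integral {a..b} (\<lambda>_. \<delta>)"
    using cont ub by (intro integral_le integrable_continuous_real) auto
  thus ?thesis using ab by simp
qed

definition qq :: "nat \<Rightarrow> real" where "qq n = (KK n 1 - KK n (1/2)) / (KK n 1 - KK n 0)"

lemma qq_int: "qq n = integral {1/2..1} (ff n) / integral {0..1} (ff n)"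
  unfolding qq_def by (simp add: KK_integral)

lemma ff_Suc: "ff (Suc n) t = sqrt (1 - t\<^sup>2) * ff n t"
  by (simp add: ff_def)

lemma ff_lb: "\<bar>t\<bar> \<le> r \<Longrightarrow> r \<le> 1 \<Longrightarrow> sqrt (1 - r\<^sup>2) ^ n \<le> ff n t"
proof -
  assume tr: "\<bar>t\<bar> \<le> r" and r1: "r \<le> 1"
  have r0: "0 \<le> r" using tr by linarith
  have "\<bar>t\<bar>\<^sup>2 \<le> r\<^sup>2" using tr by (intro power_mono) auto
  hence "t\<^sup>2 \<le> r\<^sup>2" by simp
  moreover have "r\<^sup>2 \<le> 1" using r0 r1 by (simp add: power_le_one)
  ultimately show ?thesis unfolding ff_def
    by (intro power_mono real_sqrt_le_mono) auto
qed

lemma ff_ub: "r \<le> t \<Longrightarrow> t \<le> 1 \<Longrightarrow> 0 \<le> r \<Longrightarrow> ff n t \<le> sqrt (1 - r\<^sup>2) ^ n"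
  unfolding ff_def
  by (intro power_mono real_sqrt_le_mono) (auto simp: power_mono abs_square_le_1)

lemma qq_mono: "qq (Suc n) < qq n"
proof -
  define c where "c = sqrt (3/4 :: real)"
  define A where "A = integral {0..1/2} (ff n)"
  define Bb where "Bb = integral {1/2..1} (ff n)"
  define A' where "A' = integral {0..1/2} (ff (Suc n))"
  define B' where "B' = integral {1/2..1} (ff (Suc n))"
  have c1: "c = sqrt (1 - (1/2)\<^sup>2)" unfolding c_def by (simp add: power2_eq_square)
  have gub: "sqrt (1 - t\<^sup>2) \<le> c" if "t \<in> {1/2..1}" for t
    unfolding c1 using that by (intro real_sqrt_le_mono) (auto simp: power_mono)
  have glb: "c \<le> sqrt (1 - t\<^sup>2)" if "t \<in> {0..1/2}" for t
    unfolding c1 using that by (intro real_sqrt_le_mono) (auto simp: power_mono)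
  have A0: "0 \<le> A" unfolding A_def by (intro integral_nonneg ff_nonneg ff_int) auto
  have B'0: "0 \<le> B'" unfolding B'_def by (intro integral_nonneg ff_nonneg ff_int) auto
  have "B' \<le> integral {1/2..1} (\<lambda>t. c * ff n t)"
    unfolding B'_def
  proof (intro integral_le ff_int)
    show "(\<lambda>t. c * ff n t) integrable_on {1/2..1}" by (intro integrable_continuous_real continuous_intros)
    fix t :: real assume t: "t \<in> {1/2..1}"
    have "0 \<le> ff n t" using t by (intro ff_nonneg) auto
    thus "ff (Suc n) t \<le> c * ff n t" unfolding ff_Suc using gub[OF t] by (rule mult_right_mono[rotated])
  qed
  hence B'le: "B' \<le> c * Bb" unfolding Bb_def by simp
  define \<delta> where "\<delta> = (sqrt (15/16) - c) * sqrt (15/16) ^ n"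
  have c_lt: "c < sqrt (15/16)" unfolding c_def by simp
  have \<delta>pos: "\<delta> > 0" unfolding \<delta>_def using c_lt by simp
  have "(1/4 - 0) * \<delta> \<le> integral {0..1/2} (\<lambda>t. ff (Suc n) t - c * ff n t)"
  proof (rule int_lower)
    show "continuous_on {0..1/2} (\<lambda>t. ff (Suc n) t - c * ff n t)" by (intro continuous_intros)
    fix t :: real assume t: "t \<in> {0..1/2}"
    have "0 \<le> ff n t" using t by (intro ff_nonneg) auto
    hence "c * ff n t \<le> sqrt (1 - t\<^sup>2) * ff n t" using glb[OF t] by (rule mult_right_mono[rotated])
    thus "0 \<le> ff (Suc n) t - c * ff n t" unfolding ff_Suc by simp
  next
    fix t :: real assume t: "t \<in> {0..1/4}"
    have s15: "sqrt (15/16) = sqrt (1 - (1/4)\<^sup>2)" by (simp add: power2_eq_square)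
    have g: "sqrt (15/16) \<le> sqrt (1 - t\<^sup>2)" unfolding s15 using t
      by (intro real_sqrt_le_mono) (auto simp: power_mono)
    have f: "sqrt (15/16) ^ n \<le> ff n t" unfolding s15 using t by (intro ff_lb) auto
    have g': "sqrt (15/16) - c \<le> sqrt (1 - t\<^sup>2) - c" using g by linarith
    have "\<delta> \<le> (sqrt (1 - t\<^sup>2) - c) * ff n t"
      unfolding \<delta>_def by (rule mult_mono[OF g' f]) (use g c_lt in linarith, simp)
    thus "\<delta> \<le> ff (Suc n) t - c * ff n t" unfolding ff_Suc by (simp add: algebra_simps)
  qed auto
  hence A'ge: "c * A + \<delta> / 4 \<le> A'"
    unfolding A_def A'_def by (subst (asm) integral_diff) (auto intro!: integrable_continuous_real continuous_intros)
  have Bbpos: "(3/4 - 1/2) * sqrt (7/16) ^ n \<le> Bb"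
    unfolding Bb_def
  proof (rule int_lower)
    fix t :: real assume t: "t \<in> {1/2..3/4}"
    have s7: "sqrt (7/16) = sqrt (1 - (3/4)\<^sup>2)" by (simp add: power2_eq_square)
    show "sqrt (7/16) ^ n \<le> ff n t" unfolding s7 using t by (intro ff_lb) auto
  qed (auto intro: continuous_intros ff_nonneg)
  moreover have "0 < (3/4 - 1/2) * sqrt (7/16::real) ^ n" by simp
  ultimately have Bb0: "Bb > 0" by linarith
  have split1: "integral {0..1} (ff n) = A + Bb" unfolding A_def Bb_def
    by (rule Henstock_Kurzweil_Integration.integral_combine[symmetric]) auto
  have split2: "integral {0..1} (ff (Suc n)) = A' + B'" unfolding A'_def B'_def
    by (rule Henstock_Kurzweil_Integration.integral_combine[symmetric]) auto
  have c0: "c \<ge> 0" unfolding c_def by simp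
  have p1: "B' * A \<le> c * Bb * A" using B'le A0 by (rule mult_right_mono)
  have p2: "Bb * (c * A + \<delta> / 4) \<le> Bb * A'" using A'ge Bb0 by (intro mult_left_mono) auto
  have p3: "Bb * \<delta> > 0" using Bb0 \<delta>pos by simp
  have cA: "0 \<le> c * A" using c0 A0 by simp
  have A'pos: "A' > 0" using A'ge \<delta>pos cA by linarith
  have e1: "B' * (A + Bb) = B' * A + Bb * B'" by (simp add: algebra_simps)
  have e2: "Bb * (A' + B') = Bb * A' + Bb * B'" by (simp add: algebra_simps)
  have e3: "Bb * (c * A + \<delta> / 4) = c * Bb * A + Bb * \<delta> / 4" by (simp add: algebra_simps)
  have key: "B' * (A + Bb) < Bb * (A' + B')"
    unfolding e1 e2 using p1 p2 p3 e3 by linarith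
  have D: "(A' + B') * (A + Bb) > 0" using A'pos B'0 A0 Bb0 by simp
  have "B' / (A' + B') = B' * (A + Bb) / ((A' + B') * (A + Bb))" using A0 Bb0 by simp
  also have "\<dots> < Bb * (A' + B') / ((A' + B') * (A + Bb))"
    by (rule divide_strict_right_mono[OF key D])
  also have "\<dots> = Bb / (A + Bb)" using A'pos B'0 by simp
  finally have "B' / (A' + B') < Bb / (A + Bb)" .
  thus ?thesis unfolding qq_int split1 split2 B'_def Bb_def .
qed

lemma qq_nonneg: "0 \<le> qq n"
  unfolding qq_int by (intro divide_nonneg_nonneg integral_nonneg ff_int ff_nonneg) auto

lemma qq_bound: "qq n \<le> 2 * sqrt (4/5) ^ n"
proof -
  have lo: "(1/4 - 0) * sqrt (15/16) ^ n \<le> integral {0..1} (ff n)"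
  proof (rule int_lower)
    fix t :: real assume t: "t \<in> {0..1/4}"
    have s15: "sqrt (15/16) = sqrt (1 - (1/4)\<^sup>2)" by (simp add: power2_eq_square)
    show "sqrt (15/16) ^ n \<le> ff n t" unfolding s15 using t by (intro ff_lb) auto
  qed (auto intro: continuous_intros ff_nonneg)
  have hi: "integral {1/2..1} (ff n) \<le> (1 - 1/2) * sqrt (3/4) ^ n"
  proof (rule int_upper)
    fix t :: real assume t: "t \<in> {1/2..1}"
    have s3: "sqrt (3/4) = sqrt (1 - (1/2)\<^sup>2)" by (simp add: power2_eq_square)
    show "ff n t \<le> sqrt (3/4) ^ n" unfolding s3 using t by (intro ff_ub) auto
  qed (auto intro: continuous_intros)
  have nn: "0 \<le> integral {1/2..1} (ff n)" by (intro integral_nonneg ff_int ff_nonneg) auto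
  have pos: "0 < sqrt (15/16::real) ^ n" by simp
  have "qq n \<le> ((1/2) * sqrt (3/4) ^ n) / ((1/4) * sqrt (15/16) ^ n)"
    unfolding qq_int using lo hi nn pos by (intro frac_le) auto
  also have "\<dots> = 2 * (sqrt (3/4) / sqrt (15/16)) ^ n" by (simp add: power_divide)
  also have "sqrt (3/4) / sqrt (15/16) = sqrt (4/5 :: real)"
    by (simp add: real_sqrt_divide[symmetric])
  finally show ?thesis .
qed

lemma qq_lim: "qq \<longlonglongrightarrow> 0"
proof (rule real_tendsto_sandwich)
  show "\<forall>\<^sub>F n in sequentially. 0 \<le> qq n" by (simp add: qq_nonneg)
  show "\<forall>\<^sub>F n in sequentially. qq n \<le> 2 * sqrt (4/5) ^ n" by (simp add: qq_bound)
  show "(\<lambda>n. 0) \<longlonglongrightarrow> (0::real)" by simp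
  have "(\<lambda>n. sqrt (4/5::real) ^ n) \<longlonglongrightarrow> 0" by (rule LIMSEQ_power_zero) simp
  thus "(\<lambda>n. 2 * sqrt (4/5::real) ^ n) \<longlonglongrightarrow> 0" using tendsto_mult_right_zero by blast
qed



lemma psf: "product_sigma_finite (\<lambda>_::nat. lborel::real measure)"
  by (simp add: product_sigma_finite_def lborel.sigma_finite_measure_axioms)

lemma space_L: "space (lebesgue_d d) = PiE {..<d} (\<lambda>_. UNIV)"
  by (simp add: lebesgue_d_def space_PiM)

lemma sets_L: "sets (lebesgue_d d) = sets (PiM {..<d} (\<lambda>_. lborel))"
  by (simp add: lebesgue_d_def)

lemma enorm_meas[measurable]: "enorm_d d \<in> borel_measurable (lebesgue_d d)"
  unfolding enorm_d_def lebesgue_d_def by measurable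

lemma ball_sets[measurable]: "unit_ball_d d \<in> sets (lebesgue_d d)"
  unfolding unit_ball_d_def by measurable

lemma vol_ball: "emeasure (lebesgue_d d) (unit_ball_d d) = ennreal (unit_ball_vol (real d))"
proof -
  have "unit_ball_d d = {f. sqrt (\<Sum>i\<in>{..<d}. (f i)\<^sup>2) \<le> 1} \<inter> space (PiM {..<d} (\<lambda>_. lborel))"
    unfolding unit_ball_d_def enorm_d_def lebesgue_d_def by auto
  thus ?thesis unfolding lebesgue_d_def using emeasure_cball_aux[of "{..<d}" 1] by simp
qed

lemma slice:
  assumes A[measurable]: "A \<in> sets borel"
  shows "emeasure (lebesgue_d (Suc n)) {y \<in> unit_ball_d (Suc n). y n \<in> A} =
     ennreal (unit_ball_vol (real n)) * (\<integral>\<^sup>+t. indicator A t * indicator {-1..1} t * ennreal (ff n t) \<partial>lborel)"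
proof -
  interpret product_sigma_finite "\<lambda>_::nat. lborel::real measure" by (rule psf)
  define S where "S = {y \<in> unit_ball_d (Suc n). y n \<in> A}"
  have "S = unit_ball_d (Suc n) \<inter> {y \<in> space (PiM {..<Suc n} (\<lambda>_. lborel::real measure)). y n \<in> A}"
    unfolding S_def unit_ball_d_def lebesgue_d_def by auto
  also have "\<dots> \<in> sets (lebesgue_d (Suc n))"
    using ball_sets[of "Suc n"] unfolding lebesgue_d_def
    by (intro sets.Int) (auto intro!: sets_Collect_single)
  finally have S[measurable]: "S \<in> sets (PiM (insert n {..<n}) (\<lambda>_. lborel))"
    unfolding lebesgue_d_def lessThan_Suc .
  define Bx where "Bx t = {f. sqrt (\<Sum>i\<in>{..<n}. (f i)\<^sup>2) \<le> sqrt (1 - t\<^sup>2)} \<inter> space (PiM {..<n} (\<lambda>_. lborel::real measure))" for t :: real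
  have "emeasure (lebesgue_d (Suc n)) S = nn_integral (PiM (insert n {..<n}) (\<lambda>_. lborel)) (indicator S)"
    unfolding lebesgue_d_def lessThan_Suc by (subst nn_integral_indicator) auto
  also have "\<dots> = (\<integral>\<^sup>+ t. \<integral>\<^sup>+ x. indicator S (x(n := t)) \<partial>PiM {..<n} (\<lambda>_. lborel) \<partial>lborel)"
    by (subst product_nn_integral_insert_rev) auto
  also have "\<dots> = (\<integral>\<^sup>+ t. \<integral>\<^sup>+ x. (indicator A t * indicator {-1..1} t) * indicator (Bx t) x \<partial>PiM {..<n} (\<lambda>_. lborel) \<partial>lborel)"
  proof (intro nn_integral_cong)
    fix t :: real and x assume x: "x \<in> space (PiM {..<n} (\<lambda>_. lborel::real measure))"
    have "(\<Sum>i<n. ((x(n := t)) i)\<^sup>2) = (\<Sum>i<n. (x i)\<^sup>2)"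
      by (intro sum.cong) auto
    hence sum: "(\<Sum>i<Suc n. ((x(n := t)) i)\<^sup>2) = (\<Sum>i<n. (x i)\<^sup>2) + t\<^sup>2"
      by simp
    have nn: "0 \<le> (\<Sum>i<n. (x i)\<^sup>2)" by (simp add: sum_nonneg)
    have h: "t\<^sup>2 \<le> 1 \<Longrightarrow> -1 \<le> t \<and> t \<le> 1" using abs_square_le_1[of t] by auto
    have sp: "x(n := t) \<in> space (lebesgue_d (Suc n))"
      using x by (auto simp: space_L space_PiM PiE_def extensional_def)
    have "(x(n := t) \<in> S) \<longleftrightarrow> (t \<in> A \<and> t \<in> {-1..1} \<and> x \<in> Bx t)"
    proof -
      have "(x(n := t) \<in> S) \<longleftrightarrow> t \<in> A \<and> (\<Sum>i<n. (x i)\<^sup>2) + t\<^sup>2 \<le> 1"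
        using sp unfolding S_def unit_ball_d_def enorm_d_def sum by auto
      also have "\<dots> \<longleftrightarrow> t \<in> A \<and> t \<in> {-1..1} \<and> sqrt (\<Sum>i<n. (x i)\<^sup>2) \<le> sqrt (1 - t\<^sup>2)"
        using nn h by auto
      finally show ?thesis using x unfolding Bx_def by auto
    qed
    thus "indicator S (x(n := t)) = (indicator A t * indicator {-1..1} t) * (indicator (Bx t) x :: ennreal)"
      by (simp add: indicator_def)
  qed
  also have "\<dots> = (\<integral>\<^sup>+ t. (indicator A t * indicator {-1..1} t) * emeasure (PiM {..<n} (\<lambda>_. lborel)) (Bx t) \<partial>lborel)"
    by (intro nn_integral_cong, subst nn_integral_cmult) (auto simp: Bx_def)
  also have "\<dots> = (\<integral>\<^sup>+ t. ennreal (unit_ball_vol (real n)) * (indicator A t * indicator {-1..1} t * ennreal (ff n t)) \<partial>lborel)"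
  proof (intro nn_integral_cong_AE)
    have "AE t in lborel. t \<notin> {-1, 1}"
      by (intro AE_not_in countable_imp_null_set_lborel) auto
    thus "AE t in lborel. (indicator A t * indicator {-1..1} t) * emeasure (PiM {..<n} (\<lambda>_. lborel)) (Bx t) =
        ennreal (unit_ball_vol (real n)) * (indicator A t * indicator {-1..1} t * ennreal (ff n t))"
    proof eventually_elim
      case (elim t)
      show ?case
      proof (cases "t \<in> {-1<..<1}")
        case True
        hence "0 < 1 - t\<^sup>2" by (auto simp: abs_square_less_1 abs_less_iff)
        hence "emeasure (PiM {..<n} (\<lambda>_. lborel)) (Bx t) = ennreal (unit_ball_vol (real n) * sqrt (1 - t\<^sup>2) ^ n)"
          unfolding Bx_def using emeasure_cball_aux[of "{..<n}" "sqrt (1 - t\<^sup>2)"] by simp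
        thus ?thesis by (simp add: ff_def ennreal_mult' mult_ac)
      next
        case False
        with elim have "t \<notin> {-1..1}" by auto
        thus ?thesis by simp
      qed
    qed
  qed
  also have "\<dots> = ennreal (unit_ball_vol (real n)) * (\<integral>\<^sup>+t. indicator A t * indicator {-1..1} t * ennreal (ff n t) \<partial>lborel)"
    by (subst nn_integral_cmult) (auto simp: ff_def)
  finally show ?thesis unfolding S_def .
qed



lemma shear_meas:
  assumes i: "i < d" and j: "j < d"
  shows "(\<lambda>y. y(i := a * y i + b * y j)) \<in> lebesgue_d d \<rightarrow>\<^sub>M lebesgue_d d"
proof -
  have "(\<lambda>y k. if k = i then a * y i + b * y j else y k) \<in> lebesgue_d d \<rightarrow>\<^sub>M lebesgue_d d"
    unfolding lebesgue_d_def
  proof (rule measurable_PiM_single')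
    fix k assume k: "k \<in> {..<d}"
    show "(\<lambda>y. if k = i then a * y i + b * y j else y k) \<in> PiM {..<d} (\<lambda>_. lborel) \<rightarrow>\<^sub>M lborel"
      using i j k by (cases "k = i") auto
  next
    show "(\<lambda>y k. if k = i then a * y i + b * y j else y k) \<in> space (PiM {..<d} (\<lambda>_. lborel)) \<rightarrow> (\<Pi>\<^sub>E k\<in>{..<d}. space (lborel::real measure))"
      using i by (auto simp: space_PiM PiE_def extensional_def)
  qed
  thus ?thesis unfolding fun_upd_def .
qed

lemma shear_nn:
  assumes i: "i < d" "j < d" "i \<noteq> j" and a: "\<bar>a\<bar> = 1"
    and f[measurable]: "f \<in> borel_measurable (lebesgue_d d)"
  shows "(\<integral>\<^sup>+y. f (y(i := a * y i + b * y j)) \<partial>lebesgue_d d) = (\<integral>\<^sup>+y. f y \<partial>lebesgue_d d)"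
proof -
  interpret product_sigma_finite "\<lambda>_::nat. lborel::real measure" by (rule psf)
  define I where "I = {..<d} - {i}"
  have I: "{..<d} = insert i I" "i \<notin> I" "finite I" "j \<in> I" using i unfolding I_def by auto
  have L: "lebesgue_d d = PiM (insert i I) (\<lambda>_. lborel)" unfolding lebesgue_d_def I(1) ..
  have fm: "f \<in> borel_measurable (PiM (insert i I) (\<lambda>_. lborel))" using f unfolding L .
  have gm: "(\<lambda>y. f (y(i := a * y i + b * y j))) \<in> borel_measurable (PiM (insert i I) (\<lambda>_. lborel))"
    using measurable_comp[OF shear_meas[OF i(1,2)] f] unfolding L comp_def .
  have "(\<integral>\<^sup>+y. f (y(i := a * y i + b * y j)) \<partial>lebesgue_d d) =
      (\<integral>\<^sup>+ x. (\<integral>\<^sup>+ u. f ((x(i := u))(i := a * (x(i := u)) i + b * (x(i := u)) j)) \<partial>lborel) \<partial>PiM I (\<lambda>_. lborel))"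
    unfolding L by (rule product_nn_integral_insert[OF I(3,2) gm])
  also have "\<dots> = (\<integral>\<^sup>+ x. (\<integral>\<^sup>+ u. f (x(i := u)) \<partial>lborel) \<partial>PiM I (\<lambda>_. lborel))"
  proof (rule nn_integral_cong)
    fix x assume x: "x \<in> space (PiM I (\<lambda>_. lborel::real measure))"
    have gx: "(\<lambda>u. f (x(i := u))) \<in> borel_measurable borel"
      using measurable_comp[OF measurable_component_update[OF x I(2)] fm] by (simp add: comp_def)
    have "(\<integral>\<^sup>+ u. f (x(i := u)) \<partial>lborel) = \<bar>a\<bar> * (\<integral>\<^sup>+ u. f (x(i := b * x j + a * u)) \<partial>lborel)"
      using a by (intro nn_integral_real_affine[OF gx]) auto
    also have "\<dots> = (\<integral>\<^sup>+ u. f ((x(i := u))(i := a * (x(i := u)) i + b * (x(i := u)) j)) \<partial>lborel)"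
      using a i(3) by (simp add: add.commute)
    finally show "(\<integral>\<^sup>+ u. f ((x(i := u))(i := a * (x(i := u)) i + b * (x(i := u)) j)) \<partial>lborel) = (\<integral>\<^sup>+ u. f (x(i := u)) \<partial>lborel)" ..
  qed
  also have "\<dots> = (\<integral>\<^sup>+y. f y \<partial>lebesgue_d d)"
    unfolding L by (rule product_nn_integral_insert[OF I(3,2) fm, symmetric])
  finally show ?thesis .
qed

lemma mp_from_nn:
  assumes T: "T \<in> lebesgue_d d \<rightarrow>\<^sub>M lebesgue_d d"
    and nn: "\<And>f. f \<in> borel_measurable (lebesgue_d d) \<Longrightarrow> (\<integral>\<^sup>+y. f (T y) \<partial>lebesgue_d d) = (\<integral>\<^sup>+y. f y \<partial>lebesgue_d d)"
  shows "distr (lebesgue_d d) (lebesgue_d d) T = lebesgue_d d"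
proof (rule measure_eqI)
  fix A assume A: "A \<in> sets (distr (lebesgue_d d) (lebesgue_d d) T)"
  hence A': "A \<in> sets (lebesgue_d d)" by simp
  have "emeasure (distr (lebesgue_d d) (lebesgue_d d) T) A = emeasure (lebesgue_d d) (T -` A \<inter> space (lebesgue_d d))"
    by (rule emeasure_distr[OF T A'])
  also have "\<dots> = (\<integral>\<^sup>+y. indicator (T -` A \<inter> space (lebesgue_d d)) y \<partial>lebesgue_d d)"
    using A' T by (intro nn_integral_indicator[symmetric] measurable_sets) auto
  also have "\<dots> = (\<integral>\<^sup>+y. indicator A (T y) \<partial>lebesgue_d d)"
    by (intro nn_integral_cong) (auto simp: indicator_def)
  also have "\<dots> = (\<integral>\<^sup>+y. indicator A y \<partial>lebesgue_d d)"
    using A' by (intro nn) auto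
  also have "\<dots> = emeasure (lebesgue_d d) A" using A' by simp
  finally show "emeasure (distr (lebesgue_d d) (lebesgue_d d) T) A = emeasure (lebesgue_d d) A" .
qed simp

definition dotd :: "nat \<Rightarrow> (nat \<Rightarrow> real) \<Rightarrow> (nat \<Rightarrow> real) \<Rightarrow> real" where
  "dotd d x y = (\<Sum>i<d. x i * y i)"

lemma enorm_dot: "enorm_d d x = sqrt (dotd d x x)"
  unfolding enorm_d_def dotd_def by (simp add: power2_eq_square)

definition good :: "nat \<Rightarrow> ((nat \<Rightarrow> real) \<Rightarrow> (nat \<Rightarrow> real)) \<Rightarrow> bool" where
  "good d T \<longleftrightarrow> T \<in> lebesgue_d d \<rightarrow>\<^sub>M lebesgue_d d \<and> distr (lebesgue_d d) (lebesgue_d d) T = lebesgue_d d \<and>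
     (\<forall>y\<in>space (lebesgue_d d). \<forall>z\<in>space (lebesgue_d d). dotd d (T y) (T z) = dotd d y z)"

lemma good_id: "good d (\<lambda>y. y)"
  unfolding good_def by (simp add: distr_id2)

lemma good_comp: "good d T \<Longrightarrow> good d S \<Longrightarrow> good d (\<lambda>y. S (T y))"
proof -
  assume T: "good d T" and S: "good d S"
  have Tm: "T \<in> lebesgue_d d \<rightarrow>\<^sub>M lebesgue_d d" and Sm: "S \<in> lebesgue_d d \<rightarrow>\<^sub>M lebesgue_d d"
    using T S unfolding good_def by auto
  have "distr (lebesgue_d d) (lebesgue_d d) (S \<circ> T) = distr (distr (lebesgue_d d) (lebesgue_d d) T) (lebesgue_d d) S"
    by (rule distr_distr[OF Sm Tm, symmetric])
  also have "\<dots> = lebesgue_d d" using T S unfolding good_def by simp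
  finally have "distr (lebesgue_d d) (lebesgue_d d) (\<lambda>y. S (T y)) = lebesgue_d d" by (simp add: comp_def)
  moreover have "(\<lambda>y. S (T y)) \<in> lebesgue_d d \<rightarrow>\<^sub>M lebesgue_d d"
    using measurable_comp[OF Tm Sm] by (simp add: comp_def)
  moreover have "\<forall>y\<in>space (lebesgue_d d). \<forall>z\<in>space (lebesgue_d d). dotd d (S (T y)) (S (T z)) = dotd d y z"
  proof (intro ballI)
    fix y z assume y: "y \<in> space (lebesgue_d d)" and z: "z \<in> space (lebesgue_d d)"
    have "T y \<in> space (lebesgue_d d)" "T z \<in> space (lebesgue_d d)"
      using y z Tm by (auto dest: measurable_space)
    thus "dotd d (S (T y)) (S (T z)) = dotd d y z" using S T y z unfolding good_def by auto
  qed
  ultimately show ?thesis unfolding good_def by blast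
qed

lemma shear_distr:
  assumes "i < d" "j < d" "i \<noteq> j" "\<bar>a\<bar> = 1"
  shows "distr (lebesgue_d d) (lebesgue_d d) (\<lambda>y. y(i := a * y i + b * y j)) = lebesgue_d d"
  using assms by (intro mp_from_nn shear_meas shear_nn) auto

lemma neg_good:
  assumes i: "i < d"
  shows "good d (\<lambda>y. y(i := - y i))"
proof -
  have eq: "(\<lambda>y::nat\<Rightarrow>real. y(i := - y i)) = (\<lambda>y. y(i := (-1) * y i + 0 * y i))" by simp
  have m: "(\<lambda>y. y(i := - y i)) \<in> lebesgue_d d \<rightarrow>\<^sub>M lebesgue_d d"
    unfolding eq by (rule shear_meas[OF i i])
  have "distr (lebesgue_d d) (lebesgue_d d) (\<lambda>y. y(i := - y i)) = lebesgue_d d"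
  proof (rule mp_from_nn[OF m])
    fix f :: "(nat \<Rightarrow> real) \<Rightarrow> ennreal" assume f: "f \<in> borel_measurable (lebesgue_d d)"
    show "(\<integral>\<^sup>+y. f (y(i := - y i)) \<partial>lebesgue_d d) = (\<integral>\<^sup>+y. f y \<partial>lebesgue_d d)"
    proof (cases "d = 1")
      case False
      then obtain j where j: "j < d" "j \<noteq> i" using i
        by (metis One_nat_def less_one nat_neq_iff not_less_zero)
      have "(\<lambda>y::nat\<Rightarrow>real. y(i := - y i)) = (\<lambda>y. y(i := (-1) * y i + 0 * y j))" by simp
      thus ?thesis using shear_nn[OF i j(1) j(2)[symmetric], of "-1" f 0] f by simp
    next
      case True
      interpret product_sigma_finite "\<lambda>_::nat. lborel::real measure" by (rule psf)
      have i0: "i = 0" using i True by simp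
      have "{..<d} = insert 0 {}" using True by auto
      hence L: "lebesgue_d d = PiM (insert 0 {}) (\<lambda>_. lborel)" unfolding lebesgue_d_def by simp
      have fm: "f \<in> borel_measurable (PiM (insert 0 {}) (\<lambda>_. lborel))" using f unfolding L .
      have gm: "(\<lambda>y. f (y(0 := - y 0))) \<in> borel_measurable (PiM (insert 0 {}) (\<lambda>_. lborel))"
        using measurable_comp[OF m f] unfolding L comp_def i0 .
      have "(\<integral>\<^sup>+y. f (y(i := - y i)) \<partial>lebesgue_d d) = (\<integral>\<^sup>+ x. (\<integral>\<^sup>+ u. f ((x(0 := u))(0 := - (x(0 := u)) 0)) \<partial>lborel) \<partial>PiM ({}::nat set) (\<lambda>_. lborel))"
        unfolding L i0 by (rule product_nn_integral_insert[OF _ _ gm]) auto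
      also have "\<dots> = (\<integral>\<^sup>+ x. (\<integral>\<^sup>+ u. f (x(0 := u)) \<partial>lborel) \<partial>PiM ({}::nat set) (\<lambda>_. lborel))"
      proof (rule nn_integral_cong)
        fix x assume x: "x \<in> space (PiM ({}::nat set) (\<lambda>_. lborel::real measure))"
        have gx: "(\<lambda>u. f (x(0 := u))) \<in> borel_measurable borel"
          using measurable_comp[OF measurable_component_update[OF x, of 0] fm] by (simp add: comp_def)
        have "(\<integral>\<^sup>+ u. f (x(0 := u)) \<partial>lborel) = ennreal \<bar>-1::real\<bar> * (\<integral>\<^sup>+ u. f (x(0 := 0 + (-1) * u)) \<partial>lborel)"
          by (intro nn_integral_real_affine[OF gx]) auto
        thus "(\<integral>\<^sup>+ u. f ((x(0 := u))(0 := - (x(0 := u)) 0)) \<partial>lborel) = (\<integral>\<^sup>+ u. f (x(0 := u)) \<partial>lborel)"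
          by simp
      qed
      also have "\<dots> = (\<integral>\<^sup>+y. f y \<partial>lebesgue_d d)"
        unfolding L by (rule product_nn_integral_insert[OF _ _ fm, symmetric]) auto
      finally show ?thesis .
    qed
  qed
  moreover have "dotd d (y(i := - y i)) (z(i := - z i)) = dotd d y z" for y z
    unfolding dotd_def by (intro sum.cong) auto
  ultimately show ?thesis using m unfolding good_def by blast
qed

lemma dot_split:
  assumes "i < d" "j < d" "i \<noteq> j"
  shows "dotd d u v = u i * v i + u j * v j + (\<Sum>k\<in>{..<d}-{i}-{j}. u k * v k)"
proof -
  have "dotd d u v = u i * v i + (\<Sum>k\<in>{..<d}-{i}. u k * v k)"
    unfolding dotd_def using assms by (subst sum.remove[of _ i]) auto
  also have "(\<Sum>k\<in>{..<d}-{i}. u k * v k) = u j * v j + (\<Sum>k\<in>{..<d}-{i}-{j}. u k * v k)"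
    using assms by (subst sum.remove[of _ j]) auto
  finally show ?thesis by simp
qed

lemma rot_good:
  assumes ij: "i < d" "j < d" "i \<noteq> j" and cs: "c\<^sup>2 + s\<^sup>2 = 1" "c \<noteq> -1"
  shows "good d (\<lambda>y. y(i := c * y i - s * y j, j := s * y i + c * y j))"
proof -
  define t where "t = s / (1 + c)"
  have c1: "1 + c \<noteq> 0" using cs(2) by (metis add.commute add_eq_0_iff)
  have t1: "t * (1 + c) = s" unfolding t_def using c1 by simp
  have ts: "t * s = 1 - c"
  proof -
    have "t * s * (1 + c) = s * s" using t1 by (simp add: algebra_simps)
    also have "s * s = (1 - c) * (1 + c)" using cs(1) by (simp add: power2_eq_square algebra_simps)
    finally show ?thesis using c1 by simp
  qed
  have ts2: "2 * t - s * t * t = s"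
  proof -
    have "2 * t - s * t * t = t * (2 - t * s)" by (simp add: algebra_simps)
    also have "\<dots> = t * (1 + c)" using ts by simp
    finally show ?thesis using t1 by simp
  qed
  define A where "A = (\<lambda>y::nat\<Rightarrow>real. y(i := 1 * y i + (-t) * y j))"
  define B where "B = (\<lambda>y::nat\<Rightarrow>real. y(j := 1 * y j + s * y i))"
  have eq: "(\<lambda>y. y(i := c * y i - s * y j, j := s * y i + c * y j)) = (\<lambda>y. A (B (A y)))"
  proof (intro ext)
    fix y :: "nat \<Rightarrow> real" and k
    have e1: "y i - t * y j - t * (y j + s * (y i - t * y j)) = (1 - t * s) * y i - (2 * t - s * t * t) * y j"
      by (simp add: algebra_simps)
    have e2: "y j + s * (y i - t * y j) = s * y i + (1 - t * s) * y j"
      by (simp add: algebra_simps)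
    show "(y(i := c * y i - s * y j, j := s * y i + c * y j)) k = A (B (A y)) k"
      unfolding A_def B_def using ij(3) e1 e2 ts ts2 by auto
  qed
  have Am: "A \<in> lebesgue_d d \<rightarrow>\<^sub>M lebesgue_d d" unfolding A_def by (rule shear_meas[OF ij(1,2)])
  have Bm: "B \<in> lebesgue_d d \<rightarrow>\<^sub>M lebesgue_d d" unfolding B_def by (rule shear_meas[OF ij(2,1)])
  have Ad: "distr (lebesgue_d d) (lebesgue_d d) A = lebesgue_d d" unfolding A_def by (rule shear_distr) (use ij in auto)
  have Bd: "distr (lebesgue_d d) (lebesgue_d d) B = lebesgue_d d" unfolding B_def by (rule shear_distr) (use ij in auto)
  have m: "(\<lambda>y. A (B (A y))) \<in> lebesgue_d d \<rightarrow>\<^sub>M lebesgue_d d"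
    using measurable_comp[OF measurable_comp[OF Am Bm] Am] by (simp add: comp_def)
  have "distr (lebesgue_d d) (lebesgue_d d) (A \<circ> (B \<circ> A)) =
        distr (distr (lebesgue_d d) (lebesgue_d d) (B \<circ> A)) (lebesgue_d d) A"
    by (rule distr_distr[symmetric, OF Am measurable_comp[OF Am Bm]])
  also have "distr (lebesgue_d d) (lebesgue_d d) (B \<circ> A) = distr (distr (lebesgue_d d) (lebesgue_d d) A) (lebesgue_d d) B"
    by (rule distr_distr[symmetric, OF Bm Am])
  finally have d: "distr (lebesgue_d d) (lebesgue_d d) (\<lambda>y. A (B (A y))) = lebesgue_d d"
    using Ad Bd by (simp add: comp_def)
  have dot: "dotd d (y(i := c * y i - s * y j, j := s * y i + c * y j)) (z(i := c * z i - s * z j, j := s * z i + c * z j)) = dotd d y z" for y z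
  proof -
    let ?Y = "y(i := c * y i - s * y j, j := s * y i + c * y j)"
    let ?Z = "z(i := c * z i - s * z j, j := s * z i + c * z j)"
    have r: "(\<Sum>k\<in>{..<d}-{i}-{j}. ?Y k * ?Z k) = (\<Sum>k\<in>{..<d}-{i}-{j}. y k * z k)"
      by (intro sum.cong) auto
    have "(c * y i - s * y j) * (c * z i - s * z j) + (s * y i + c * z j * 0 + c * y j) * (s * z i + c * z j)
        = (c\<^sup>2 + s\<^sup>2) * (y i * z i + y j * z j)"
      by (simp add: algebra_simps power2_eq_square)
    hence a: "(c * y i - s * y j) * (c * z i - s * z j) + (s * y i + c * y j) * (s * z i + c * z j) = y i * z i + y j * z j"
      using cs(1) by simp
    show ?thesis
      using dot_split[OF ij, of ?Y ?Z] dot_split[OF ij, of y z] r a ij(3) by simp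
  qed
  have eqy: "A (B (A y)) = y(i := c * y i - s * y j, j := s * y i + c * y j)" for y
    using fun_cong[OF eq, of y] by simp
  show ?thesis unfolding good_def eq using m d dot by (simp add: eqy)
qed

lemma good_space: "good d T \<Longrightarrow> y \<in> space (lebesgue_d d) \<Longrightarrow> T y \<in> space (lebesgue_d d)"
  unfolding good_def by (auto dest: measurable_space)

lemma rot_exists_aux:
  assumes x: "x \<in> space (lebesgue_d (Suc n))"
  shows "m \<le> n \<Longrightarrow> \<exists>T. good (Suc n) T \<and> (\<forall>k<m. T x k = 0)"
proof (induction m)
  case 0 show ?case using good_id by auto
next
  case (Suc m)
  then obtain T where T: "good (Suc n) T" "\<forall>k<m. T x k = 0" by auto
  have mn: "m < n" using Suc.prems by simp
  define a where "a = T x n"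
  define b where "b = T x m"
  show ?case
  proof (cases "b = 0")
    case True
    hence "\<forall>k<Suc m. T x k = 0" using T(2) unfolding b_def by (auto simp: less_Suc_eq)
    thus ?thesis using T(1) by blast
  next
    case False
    define r where "r = sqrt (a\<^sup>2 + b\<^sup>2)"
    have r2: "r\<^sup>2 = a\<^sup>2 + b\<^sup>2" unfolding r_def by simp
    have rpos: "r > 0" unfolding r_def using False by (simp add: add_nonneg_pos)
    define c where "c = a / r"
    define s where "s = - b / r"
    have "c\<^sup>2 + s\<^sup>2 = (a\<^sup>2 + b\<^sup>2) / r\<^sup>2" unfolding c_def s_def
      by (simp add: power_divide add_divide_distrib)
    hence cs: "c\<^sup>2 + s\<^sup>2 = 1" using rpos r2 False by simp
    have cn: "c \<noteq> -1"
    proof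
      assume "c = -1"
      hence "s\<^sup>2 = 0" using cs by simp
      hence "b = 0" unfolding s_def using rpos by simp
      with False show False by simp
    qed
    define R where "R = (\<lambda>y::nat\<Rightarrow>real. y(n := c * y n - s * y m, m := s * y n + c * y m))"
    have Rg: "good (Suc n) R" unfolding R_def using mn cs cn by (intro rot_good) auto
    have g: "good (Suc n) (\<lambda>y. R (T y))" by (rule good_comp[OF T(1) Rg])
    have "s * a + c * b = 0" unfolding s_def c_def using rpos by (simp add: field_simps)
    hence "\<forall>k<Suc m. R (T x) k = 0"
      using T(2) mn unfolding R_def a_def b_def by (auto simp: less_Suc_eq)
    thus ?thesis using g by blast
  qed
qed

lemma rot_exists:
  assumes x: "x \<in> space (lebesgue_d (Suc n))"
  shows "\<exists>T. good (Suc n) T \<and> (\<forall>k<Suc n. T x k = (if k = n then enorm_d (Suc n) x else 0))"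
proof -
  obtain T where T: "good (Suc n) T" "\<forall>k<n. T x k = 0" using rot_exists_aux[OF x, of n] by auto
  have "dotd (Suc n) (T x) (T x) = dotd (Suc n) x x"
    using T(1) x unfolding good_def by auto
  moreover have "dotd (Suc n) (T x) (T x) = (T x n)\<^sup>2"
    unfolding dotd_def using T(2) by (simp add: power2_eq_square)
  ultimately have e: "enorm_d (Suc n) x = \<bar>T x n\<bar>" unfolding enorm_dot by (metis real_sqrt_abs)
  show ?thesis
  proof (cases "T x n \<ge> 0")
    case True
    thus ?thesis using T e by (intro exI[of _ T]) (auto simp: less_Suc_eq)
  next
    case False
    have g: "good (Suc n) (\<lambda>y. (T y)(n := - T y n))"
      by (rule good_comp[OF T(1) neg_good]) simp
    show ?thesis using False T e by (intro exI[of _ "\<lambda>y. (T y)(n := - T y n)"]) (auto simp: less_Suc_eq g)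
  qed
qed

lemma ball_dot: "y \<in> unit_ball_d d \<longleftrightarrow> y \<in> space (lebesgue_d d) \<and> dotd d y y \<le> 1"
  unfolding unit_ball_d_def enorm_dot by auto

lemma dir_meas:
  assumes x: "x \<in> space (lebesgue_d (Suc n))" and C: "C \<in> sets borel"
  shows "emeasure (lebesgue_d (Suc n)) {y \<in> unit_ball_d (Suc n). dotd (Suc n) y x \<in> C} =
         emeasure (lebesgue_d (Suc n)) {y \<in> unit_ball_d (Suc n). enorm_d (Suc n) x * y n \<in> C}"
proof -
  obtain T where T: "good (Suc n) T" "\<forall>k<Suc n. T x k = (if k = n then enorm_d (Suc n) x else 0)"
    using rot_exists[OF x] by blast
  define e where "e = enorm_d (Suc n) x"
  define S' where "S' = {y \<in> unit_ball_d (Suc n). e * y n \<in> C}"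
  have Cb: "(\<lambda>t. e * t) -` C \<in> sets borel" by (intro measurable_sets_borel[OF _ C]) simp
  have "S' = unit_ball_d (Suc n) \<inter> {y \<in> space (PiM {..<Suc n} (\<lambda>_. lborel::real measure)). y n \<in> (\<lambda>t. e * t) -` C}"
    unfolding S'_def unit_ball_d_def lebesgue_d_def by auto
  also have "\<dots> \<in> sets (lebesgue_d (Suc n))"
  proof -
    have "{y \<in> space (PiM {..<Suc n} (\<lambda>_. lborel::real measure)). y n \<in> (\<lambda>t. e * t) -` C} \<in> sets (PiM {..<Suc n} (\<lambda>_. lborel::real measure))"
      by (rule sets_Collect_single) (use Cb in auto)
    thus ?thesis using ball_sets[of "Suc n"] unfolding lebesgue_d_def by (rule sets.Int[rotated])
  qed
  finally have S': "S' \<in> sets (lebesgue_d (Suc n))" .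
  have Tm: "T \<in> lebesgue_d (Suc n) \<rightarrow>\<^sub>M lebesgue_d (Suc n)" and Td: "distr (lebesgue_d (Suc n)) (lebesgue_d (Suc n)) T = lebesgue_d (Suc n)"
    using T(1) unfolding good_def by auto
  have "emeasure (lebesgue_d (Suc n)) S' = emeasure (distr (lebesgue_d (Suc n)) (lebesgue_d (Suc n)) T) S'"
    using Td by simp
  also have "\<dots> = emeasure (lebesgue_d (Suc n)) (T -` S' \<inter> space (lebesgue_d (Suc n)))"
    by (rule emeasure_distr[OF Tm S'])
  also have "T -` S' \<inter> space (lebesgue_d (Suc n)) = {y \<in> unit_ball_d (Suc n). dotd (Suc n) y x \<in> C}"
  proof (intro set_eqI iffI)
    fix y assume y: "y \<in> T -` S' \<inter> space (lebesgue_d (Suc n))"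
    hence sp: "y \<in> space (lebesgue_d (Suc n))" by auto
    have dd: "dotd (Suc n) (T y) (T y) = dotd (Suc n) y y" "dotd (Suc n) (T y) (T x) = dotd (Suc n) y x"
      using T(1) sp x unfolding good_def by auto
    have "dotd (Suc n) (T y) (T x) = T y n * e"
      unfolding dotd_def e_def using T(2) by (simp add: lessThan_Suc)
    thus "y \<in> {y \<in> unit_ball_d (Suc n). dotd (Suc n) y x \<in> C}"
      using y sp dd unfolding S'_def ball_dot by (auto simp: mult.commute)
  next
    fix y assume y: "y \<in> {y \<in> unit_ball_d (Suc n). dotd (Suc n) y x \<in> C}"
    hence sp: "y \<in> space (lebesgue_d (Suc n))" unfolding ball_dot by auto
    have dd: "dotd (Suc n) (T y) (T y) = dotd (Suc n) y y" "dotd (Suc n) (T y) (T x) = dotd (Suc n) y x"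
      using T(1) sp x unfolding good_def by auto
    have "dotd (Suc n) (T y) (T x) = T y n * e"
      unfolding dotd_def e_def using T(2) by (simp add: lessThan_Suc)
    thus "y \<in> T -` S' \<inter> space (lebesgue_d (Suc n))"
      using y sp dd good_space[OF T(1) sp] unfolding S'_def ball_dot by (auto simp: mult.commute)
  qed
  finally show ?thesis unfolding S'_def e_def ..
qed



lemma vimage_minus: "A \<in> sets borel \<Longrightarrow> (\<lambda>u::real. a - u) -` A \<in> sets borel"
  by (rule measurable_sets_borel[of _ borel]) auto

lemma lborel_reflect:
  assumes A: "A \<in> sets borel"
  shows "emeasure lborel ((\<lambda>u. a - u) -` A) = emeasure lborel (A :: real set)"
proof -
  have m: "indicator A \<in> borel_measurable (borel :: real measure)" using A by simp
  have "emeasure lborel A = (\<integral>\<^sup>+u. indicator A u \<partial>lborel)" using A by simp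
  also have "\<dots> = ennreal \<bar>-1::real\<bar> * (\<integral>\<^sup>+u. indicator A (a + (-1) * u) \<partial>lborel)"
    by (rule nn_integral_real_affine[OF m]) simp
  also have "\<dots> = (\<integral>\<^sup>+u. indicator ((\<lambda>u. a - u) -` A) u \<partial>lborel)"
    by (simp add: indicator_def)
  also have "\<dots> = emeasure lborel ((\<lambda>u. a - u) -` A)"
    using A by (intro nn_integral_indicator) (simp add: vimage_minus)
  finally show ?thesis ..
qed

definition refl_map :: "nat \<Rightarrow> (nat \<Rightarrow> real) \<Rightarrow> (nat \<Rightarrow> real) \<Rightarrow> (nat \<Rightarrow> real)" where
  "refl_map d x y = (\<lambda>i\<in>{..<d}. x i - y i)"

lemma refl_meas: "refl_map d x \<in> lebesgue_d d \<rightarrow>\<^sub>M lebesgue_d d"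
  unfolding refl_map_def lebesgue_d_def by (intro measurable_restrict) auto

lemma refl_distr: "distr (lebesgue_d d) (lebesgue_d d) (refl_map d x) = lebesgue_d d"
proof -
  interpret product_sigma_finite "\<lambda>_::nat. lborel::real measure" by (rule psf)
  show ?thesis unfolding lebesgue_d_def
  proof (rule PiM_eqI)
    fix A assume A: "\<And>i. i \<in> {..<d} \<Longrightarrow> A i \<in> sets (lborel::real measure)"
    have "refl_map d x -` PiE {..<d} A \<inter> space (PiM {..<d} (\<lambda>_. lborel)) = PiE {..<d} (\<lambda>i. (\<lambda>u. x i - u) -` A i)"
      unfolding refl_map_def by (auto simp: space_PiM PiE_def Pi_def extensional_def)
    moreover have "PiE {..<d} A \<in> sets (PiM {..<d} (\<lambda>_. lborel))" using A by (intro sets_PiM_I_finite) auto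
    ultimately have "emeasure (distr (PiM {..<d} (\<lambda>_. lborel)) (PiM {..<d} (\<lambda>_. lborel)) (refl_map d x)) (PiE {..<d} A)
        = emeasure (PiM {..<d} (\<lambda>_. lborel)) (PiE {..<d} (\<lambda>i. (\<lambda>u. x i - u) -` A i))"
      using refl_meas[of d x] unfolding lebesgue_d_def by (simp add: emeasure_distr)
    also have "\<dots> = (\<Prod>i\<in>{..<d}. emeasure lborel ((\<lambda>u. x i - u) -` A i))"
      using A by (intro emeasure_PiM) (auto simp: vimage_minus)
    also have "\<dots> = (\<Prod>i\<in>{..<d}. emeasure lborel (A i))"
      using A by (intro prod.cong lborel_reflect) auto
    finally show "emeasure (distr (PiM {..<d} (\<lambda>_. lborel)) (PiM {..<d} (\<lambda>_. lborel)) (refl_map d x)) (PiE {..<d} A) = (\<Prod>i\<in>{..<d}. emeasure lborel (A i))" .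
  qed simp_all
qed

lemma dot_sym: "dotd d x y = dotd d y x"
  unfolding dotd_def by (simp add: mult.commute)

lemma dot_diff: "dotd d (\<lambda>i. x i - y i) (\<lambda>i. x i - y i) = dotd d x x - 2 * dotd d y x + dotd d y y"
  unfolding dotd_def by (simp add: algebra_simps sum.distrib sum_subtractf sum_distrib_left power2_eq_square)

lemma dot_restrict1: "dotd d (\<lambda>i\<in>{..<d}. f i) g = dotd d f g"
  unfolding dotd_def by (intro sum.cong) auto

lemma dot_diff2: "dotd d (\<lambda>i. x i - y i) z = dotd d x z - dotd d y z"
  unfolding dotd_def by (simp add: algebra_simps sum_subtractf)

lemma dot_refl: "dotd d (refl_map d x y) z = dotd d (\<lambda>i. x i - y i) z"
  unfolding dotd_def refl_map_def by (intro sum.cong) auto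

lemma dot_refl2: "dotd d z (refl_map d x y) = dotd d z (\<lambda>i. x i - y i)"
  unfolding dotd_def refl_map_def by (intro sum.cong) auto

lemma enorm_le1: "enorm_d d v \<le> 1 \<longleftrightarrow> dotd d v v \<le> 1"
  unfolding enorm_dot by simp

lemma set_dot_sets:
  assumes x: "x \<in> space (lebesgue_d d)" and C: "C \<in> sets borel"
  shows "{y \<in> unit_ball_d d. dotd d y x \<in> C} \<in> sets (lebesgue_d d)"
proof -
  have m: "(\<lambda>y. dotd d y x) \<in> borel_measurable (lebesgue_d d)"
    unfolding dotd_def lebesgue_d_def by measurable
  have "{y \<in> unit_ball_d d. dotd d y x \<in> C} = unit_ball_d d \<inter> ((\<lambda>y. dotd d y x) -` C \<inter> space (lebesgue_d d))"
    unfolding unit_ball_d_def by auto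
  also have "\<dots> \<in> sets (lebesgue_d d)"
    by (intro sets.Int ball_sets measurable_sets[OF m C])
  finally show ?thesis .
qed

lemma lens_split:
  assumes x: "x \<in> unit_ball_d d"
  shows "emeasure (lebesgue_d d) {y \<in> unit_ball_d d. enorm_d d (\<lambda>i. x i - y i) \<le> 1} =
    emeasure (lebesgue_d d) {y \<in> unit_ball_d d. dotd d y x \<in> {dotd d x x / 2..}} +
    emeasure (lebesgue_d d) {y \<in> unit_ball_d d. dotd d y x \<in> {dotd d x x / 2<..}}"
proof -
  define r2 where "r2 = dotd d x x"
  have xs: "x \<in> space (lebesgue_d d)" using x unfolding unit_ball_d_def by auto
  define S where "S = {y \<in> unit_ball_d d. enorm_d d (\<lambda>i. x i - y i) \<le> 1}"
  define S1 where "S1 = {y \<in> unit_ball_d d. dotd d y x \<in> {r2 / 2..}}"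
  define S2 where "S2 = {y \<in> unit_ball_d d. enorm_d d (\<lambda>i. x i - y i) \<le> 1 \<and> dotd d y x < r2 / 2}"
  define S2' where "S2' = {y \<in> unit_ball_d d. dotd d y x \<in> {r2 / 2<..}}"
  have S1m: "S1 \<in> sets (lebesgue_d d)" unfolding S1_def by (rule set_dot_sets[OF xs]) simp
  have S2'm: "S2' \<in> sets (lebesgue_d d)" unfolding S2'_def by (rule set_dot_sets[OF xs]) simp
  have pre: "refl_map d x -` S2' \<inter> space (lebesgue_d d) = S2"
  proof (intro set_eqI iffI)
    fix y assume y: "y \<in> refl_map d x -` S2' \<inter> space (lebesgue_d d)"
    hence ys: "y \<in> space (lebesgue_d d)" by auto
    have a: "dotd d (refl_map d x y) (refl_map d x y) = r2 - 2 * dotd d y x + dotd d y y"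
      unfolding dot_refl dot_refl2 r2_def by (rule dot_diff)
    have b: "dotd d (refl_map d x y) x = r2 - dotd d y x"
      unfolding dot_refl r2_def by (rule dot_diff2)
    have c: "dotd d (\<lambda>i. x i - y i) (\<lambda>i. x i - y i) = r2 - 2 * dotd d y x + dotd d y y"
      unfolding r2_def by (rule dot_diff)
    from y have "dotd d (refl_map d x y) (refl_map d x y) \<le> 1" "r2 / 2 < dotd d (refl_map d x y) x"
      unfolding S2'_def ball_dot by auto
    hence "dotd d y y \<le> 1" "dotd d (\<lambda>i. x i - y i) (\<lambda>i. x i - y i) \<le> 1" "dotd d y x < r2 / 2"
      unfolding a b c by linarith+
    thus "y \<in> S2" unfolding S2_def ball_dot enorm_le1 using ys by auto
  next
    fix y assume y: "y \<in> S2"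
    hence ys: "y \<in> space (lebesgue_d d)" unfolding S2_def ball_dot by auto
    have a: "dotd d (refl_map d x y) (refl_map d x y) = r2 - 2 * dotd d y x + dotd d y y"
      unfolding dot_refl dot_refl2 r2_def by (rule dot_diff)
    have b: "dotd d (refl_map d x y) x = r2 - dotd d y x"
      unfolding dot_refl r2_def by (rule dot_diff2)
    have c: "dotd d (\<lambda>i. x i - y i) (\<lambda>i. x i - y i) = r2 - 2 * dotd d y x + dotd d y y"
      unfolding r2_def by (rule dot_diff)
    from y have "dotd d (\<lambda>i. x i - y i) (\<lambda>i. x i - y i) \<le> 1" "dotd d y x < r2 / 2"
      unfolding S2_def enorm_le1 by auto
    hence "dotd d (refl_map d x y) (refl_map d x y) \<le> 1" "r2 / 2 < dotd d (refl_map d x y) x"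
      unfolding a b c by linarith+
    moreover have "refl_map d x y \<in> space (lebesgue_d d)" using measurable_space[OF refl_meas ys] .
    ultimately show "y \<in> refl_map d x -` S2' \<inter> space (lebesgue_d d)"
      unfolding S2'_def ball_dot using ys by auto
  qed
  have S2m: "S2 \<in> sets (lebesgue_d d)" unfolding pre[symmetric]
    by (rule measurable_sets[OF refl_meas S2'm])
  have e2: "emeasure (lebesgue_d d) S2 = emeasure (lebesgue_d d) S2'"
  proof -
    have "emeasure (lebesgue_d d) S2' = emeasure (distr (lebesgue_d d) (lebesgue_d d) (refl_map d x)) S2'"
      by (simp add: refl_distr)
    also have "\<dots> = emeasure (lebesgue_d d) S2"
      unfolding pre[symmetric] by (rule emeasure_distr[OF refl_meas S2'm])
    finally show ?thesis ..
  qed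
  have "S = S1 \<union> S2"
  proof (intro set_eqI iffI)
    fix y assume "y \<in> S1 \<union> S2"
    thus "y \<in> S"
    proof
      assume y: "y \<in> S1"
      have c: "dotd d (\<lambda>i. x i - y i) (\<lambda>i. x i - y i) = r2 - 2 * dotd d y x + dotd d y y"
        unfolding r2_def by (rule dot_diff)
      from y have "dotd d y y \<le> 1" "r2 / 2 \<le> dotd d y x" unfolding S1_def ball_dot by auto
      hence "dotd d (\<lambda>i. x i - y i) (\<lambda>i. x i - y i) \<le> 1" unfolding c by linarith
      thus "y \<in> S" using y unfolding S_def S1_def enorm_le1 by auto
    qed (auto simp: S2_def S_def)
  qed (auto simp: S_def S1_def S2_def)
  moreover have "S1 \<inter> S2 = {}" unfolding S1_def S2_def by auto
  ultimately have "emeasure (lebesgue_d d) S = emeasure (lebesgue_d d) S1 + emeasure (lebesgue_d d) S2"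
    using S1m S2m by (simp add: plus_emeasure)
  thus ?thesis unfolding S_def e2 S1_def S2'_def r2_def .
qed

lemma J_nonneg: "-1 \<le> a \<Longrightarrow> a \<le> 1 \<Longrightarrow> 0 \<le> KK n 1 - KK n a"
proof -
  assume a: "-1 \<le> a" "a \<le> 1"
  have "0 \<le> integral {a..1} (ff n)"
    using a by (intro integral_nonneg ff_int ff_nonneg) auto
  thus ?thesis using KK_integral[of a 1 n] a by simp
qed

lemma int_tail:
  assumes a: "0 \<le> a" "a \<le> 1"
  shows "(\<integral>\<^sup>+ t. indicator {a..} t * indicator {-1..1} t * ennreal (ff n t) \<partial>lborel) = ennreal (KK n 1 - KK n a)"
proof -
  have "(ff n has_integral (KK n 1 - KK n a)) {a..1}"
    using a KK_integral[of a 1 n] by (metis ff_int has_integral_integral le_less_trans less_eq_real_def neg_less_0_iff_less one_le_numeral zero_less_numeral order_trans)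
  hence "(\<integral>\<^sup>+ t. ennreal (ff n t) * indicator {a..1} t \<partial>lborel) = ennreal (KK n 1 - KK n a)"
    by (rule nn_integral_has_integral_lebesgue'[rotated]) (use a in \<open>auto intro: ff_nonneg\<close>)
  moreover have "(\<integral>\<^sup>+ t. indicator {a..} t * indicator {-1..1} t * ennreal (ff n t) \<partial>lborel) =
      (\<integral>\<^sup>+ t. ennreal (ff n t) * indicator {a..1} t \<partial>lborel)"
    using a by (intro nn_integral_cong) (auto simp: indicator_def)
  ultimately show ?thesis by simp
qed

lemma int_tail_open:
  assumes a: "0 \<le> a" "a \<le> 1"
  shows "(\<integral>\<^sup>+ t. indicator {a<..} t * indicator {-1..1} t * ennreal (ff n t) \<partial>lborel) = ennreal (KK n 1 - KK n a)"
proof -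
  have "(\<integral>\<^sup>+ t. indicator {a<..} t * indicator {-1..1} t * ennreal (ff n t) \<partial>lborel) =
      (\<integral>\<^sup>+ t. indicator {a..} t * indicator {-1..1} t * ennreal (ff n t) \<partial>lborel)"
    using AE_lborel_singleton[of a] by (intro nn_integral_cong_AE) (auto elim!: eventually_mono simp: indicator_def)
  thus ?thesis using int_tail[OF a] by simp
qed

lemma lens_val:
  assumes x: "x \<in> unit_ball_d (Suc n)" and e: "0 < enorm_d (Suc n) x"
  shows "emeasure (lebesgue_d (Suc n)) {y \<in> unit_ball_d (Suc n). enorm_d (Suc n) (\<lambda>i. x i - y i) \<le> 1} =
    ennreal (2 * unit_ball_vol (real n) * (KK n 1 - KK n (enorm_d (Suc n) x / 2)))"
proof -
  define e where "e = enorm_d (Suc n) x"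
  have xs: "x \<in> space (lebesgue_d (Suc n))" using x unfolding unit_ball_d_def by auto
  have e1: "e \<le> 1" using x unfolding unit_ball_d_def e_def by auto
  have r2: "dotd (Suc n) x x = e\<^sup>2" unfolding e_def enorm_dot by (simp add: dotd_def sum_nonneg)
  have e0: "0 < e" using e unfolding e_def .
  have s1: "{y \<in> unit_ball_d (Suc n). e * y n \<in> {e\<^sup>2 / 2..}} = {y \<in> unit_ball_d (Suc n). y n \<in> {e / 2..}}"
  proof -
    have "e * t \<in> {e\<^sup>2 / 2..} \<longleftrightarrow> t \<in> {e / 2..}" for t
      using e0 by (auto simp: power2_eq_square field_simps)
    thus ?thesis by auto
  qed
  have s2: "{y \<in> unit_ball_d (Suc n). e * y n \<in> {e\<^sup>2 / 2<..}} = {y \<in> unit_ball_d (Suc n). y n \<in> {e / 2<..}}"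
  proof -
    have "e * t \<in> {e\<^sup>2 / 2<..} \<longleftrightarrow> t \<in> {e / 2<..}" for t
      using e0 by (auto simp: power2_eq_square field_simps)
    thus ?thesis by auto
  qed
  have J: "0 \<le> KK n 1 - KK n (e / 2)" using e0 e1 by (intro J_nonneg) auto
  have "emeasure (lebesgue_d (Suc n)) {y \<in> unit_ball_d (Suc n). enorm_d (Suc n) (\<lambda>i. x i - y i) \<le> 1} =
    emeasure (lebesgue_d (Suc n)) {y \<in> unit_ball_d (Suc n). e * y n \<in> {e\<^sup>2 / 2..}} +
    emeasure (lebesgue_d (Suc n)) {y \<in> unit_ball_d (Suc n). e * y n \<in> {e\<^sup>2 / 2<..}}"
    unfolding lens_split[OF x] r2
  proof (intro arg_cong2[where f="(+)"])
    show "emeasure (lebesgue_d (Suc n)) {y \<in> unit_ball_d (Suc n). dotd (Suc n) y x \<in> {e\<^sup>2 / 2..}} =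
      emeasure (lebesgue_d (Suc n)) {y \<in> unit_ball_d (Suc n). e * y n \<in> {e\<^sup>2 / 2..}}"
      unfolding e_def by (rule dir_meas[OF xs]) simp
    show "emeasure (lebesgue_d (Suc n)) {y \<in> unit_ball_d (Suc n). dotd (Suc n) y x \<in> {e\<^sup>2 / 2<..}} =
      emeasure (lebesgue_d (Suc n)) {y \<in> unit_ball_d (Suc n). e * y n \<in> {e\<^sup>2 / 2<..}}"
      unfolding e_def by (rule dir_meas[OF xs]) simp
  qed
  also have "\<dots> = ennreal (unit_ball_vol (real n)) * ennreal (KK n 1 - KK n (e / 2)) +
                   ennreal (unit_ball_vol (real n)) * ennreal (KK n 1 - KK n (e / 2))"
    unfolding s1 s2
  proof (intro arg_cong2[where f="(+)"])
    show "emeasure (lebesgue_d (Suc n)) {y \<in> unit_ball_d (Suc n). y n \<in> {e / 2..}} =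
      ennreal (unit_ball_vol (real n)) * ennreal (KK n 1 - KK n (e / 2))"
      apply (subst slice, simp)
      apply (subst int_tail)
      using e0 e1 apply auto
      done
    show "emeasure (lebesgue_d (Suc n)) {y \<in> unit_ball_d (Suc n). y n \<in> {e / 2<..}} =
      ennreal (unit_ball_vol (real n)) * ennreal (KK n 1 - KK n (e / 2))"
      apply (subst slice, simp)
      apply (subst int_tail_open)
      using e0 e1 apply auto
      done
  qed
  also have "\<dots> = ennreal (2 * unit_ball_vol (real n) * (KK n 1 - KK n (e / 2)))"
    using J by (simp add: ennreal_mult'[symmetric] ennreal_plus[symmetric] del: ennreal_plus)
  finally show ?thesis unfolding e_def .
qed



lemma null0:
  "emeasure (lebesgue_d (Suc n)) {x \<in> space (lebesgue_d (Suc n)). enorm_d (Suc n) x \<le> 0} = 0"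
proof -
  interpret product_sigma_finite "\<lambda>_::nat. lborel::real measure" by (rule psf)
  define P where "P = PiE {..<Suc n} (\<lambda>i. if i = 0 then {0} else (UNIV::real set))"
  have sub: "{x \<in> space (lebesgue_d (Suc n)). enorm_d (Suc n) x \<le> 0} \<subseteq> P"
  proof
    fix x assume x: "x \<in> {x \<in> space (lebesgue_d (Suc n)). enorm_d (Suc n) x \<le> 0}"
    hence "(\<Sum>i<Suc n. (x i)\<^sup>2) \<le> 0" unfolding enorm_d_def by auto
    moreover have "0 \<le> (\<Sum>i<Suc n. (x i)\<^sup>2)" by (simp add: sum_nonneg)
    ultimately have "(\<Sum>i<Suc n. (x i)\<^sup>2) = 0" by linarith
    hence "\<forall>i\<in>{..<Suc n}. (x i)\<^sup>2 = 0" by (subst (asm) sum_nonneg_eq_0_iff) auto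
    hence x0: "x 0 = 0" by auto
    have ext: "x \<in> extensional {..<Suc n}" using x by (simp add: space_L PiE_iff)
    show "x \<in> P" unfolding P_def PiE_iff using ext x0 by simp
  qed
  have sb: "(if i = 0 then {0} else (UNIV::real set)) \<in> sets lborel" for i :: nat by simp
  have Ps: "P \<in> sets (lebesgue_d (Suc n))" unfolding P_def lebesgue_d_def
    by (rule sets_PiM_I_finite) (simp, rule sb)
  have "emeasure (lebesgue_d (Suc n)) P = (\<Prod>i<Suc n. emeasure lborel (if i = 0 then {0} else (UNIV::real set)))"
    unfolding P_def lebesgue_d_def by (rule emeasure_PiM) (simp, rule sb)
  also have "\<dots> = 0" by (rule prod_zero) (simp, rule bexI[of _ 0], simp_all)
  finally have "emeasure (lebesgue_d (Suc n)) P = 0" .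
  hence "emeasure (lebesgue_d (Suc n)) {x \<in> space (lebesgue_d (Suc n)). enorm_d (Suc n) x \<le> 0} \<le> 0"
    using emeasure_mono[OF sub Ps] by simp
  thus ?thesis by simp
qed

lemma ball_r_vol:
  assumes m: "0 \<le> m"
  shows "emeasure (lebesgue_d (Suc n)) {x \<in> space (lebesgue_d (Suc n)). enorm_d (Suc n) x \<le> m} =
         ennreal (unit_ball_vol (real (Suc n)) * m ^ Suc n)"
proof (cases "m = 0")
  case True thus ?thesis using null0 by simp
next
  case False
  hence "m > 0" using m by simp
  moreover have "{x \<in> space (lebesgue_d (Suc n)). enorm_d (Suc n) x \<le> m} =
     {f. sqrt (\<Sum>i\<in>{..<Suc n}. (f i)\<^sup>2) \<le> m} \<inter> space (PiM {..<Suc n} (\<lambda>_. lborel))"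
    unfolding enorm_d_def lebesgue_d_def by auto
  ultimately show ?thesis unfolding lebesgue_d_def using emeasure_cball_aux[of "{..<Suc n}" m] by simp
qed

lemma enorm_sets: "{x \<in> space (lebesgue_d d). enorm_d d x \<le> m} \<in> sets (lebesgue_d d)"
  by measurable

lemma pow_integral:
  assumes "0 \<le> m" "m \<le> 1"
  shows "((\<lambda>s. V * real (Suc n) * s ^ n) has_integral V * (1 - m ^ Suc n)) {m..1}"
proof -
  have "((\<lambda>s. V * real (Suc n) * s ^ n) has_integral (V * 1 ^ Suc n - V * m ^ Suc n)) {m..1}"
  proof (rule fundamental_theorem_of_calculus)
    fix s :: real assume "s \<in> {m..1}"
    have "((\<lambda>s. V * s ^ Suc n) has_real_derivative V * real (Suc n) * s ^ n) (at s)"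
      by (rule DERIV_cong[OF DERIV_cmult[OF DERIV_power_Suc[OF DERIV_ident]]]) simp
    hence "((\<lambda>s. V * s ^ Suc n) has_vector_derivative V * real (Suc n) * s ^ n) (at s)"
      unfolding has_real_derivative_iff_has_vector_derivative .
    thus "((\<lambda>s. V * s ^ Suc n) has_vector_derivative V * real (Suc n) * s ^ n) (at s within {m..1})"
      by (rule has_vector_derivative_at_within)
  qed (use assms in auto)
  thus ?thesis by (simp add: algebra_simps)
qed

definition radd :: "nat \<Rightarrow> real \<Rightarrow> ennreal" where
  "radd n s = indicator {0..1} s * ennreal (unit_ball_vol (real (Suc n)) * real (Suc n) * s ^ n)"

lemma radd_meas[measurable]: "radd n \<in> borel_measurable borel"
  unfolding radd_def by measurable

lemma radial_measure:
  "distr (density (lebesgue_d (Suc n)) (indicator (unit_ball_d (Suc n)))) borel (enorm_d (Suc n)) =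
   density lborel (radd n)"
proof (rule measure_eqI_lessThan)
  define V where "V = unit_ball_vol (real (Suc n))"
  have V0: "0 < V" unfolding V_def by simp
  let ?L = "lebesgue_d (Suc n)"
  let ?B = "unit_ball_d (Suc n)"
  have val: "emeasure (distr (density ?L (indicator ?B)) borel (enorm_d (Suc n))) {a<..} =
      (if a < 1 then ennreal (V * (1 - (max a 0) ^ Suc n)) else 0)" for a
  proof -
    have pre: "enorm_d (Suc n) -` {a<..} \<inter> space ?L \<in> sets ?L"
      by (rule measurable_sets[OF enorm_meas]) simp
    have "emeasure (distr (density ?L (indicator ?B)) borel (enorm_d (Suc n))) {a<..} =
        emeasure (density ?L (indicator ?B)) (enorm_d (Suc n) -` {a<..} \<inter> space ?L)"
      by (subst emeasure_distr) auto
    also have "\<dots> = emeasure ?L (?B \<inter> (enorm_d (Suc n) -` {a<..} \<inter> space ?L))"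
      by (rule emeasure_restricted[OF ball_sets pre])
    also have "\<dots> = (if a < 1 then ennreal (V * (1 - (max a 0) ^ Suc n)) else 0)"
    proof (cases "a < 0")
      case True
      have "\<And>x. 0 \<le> enorm_d (Suc n) x" unfolding enorm_d_def by (simp add: sum_nonneg)
      hence "?B \<inter> (enorm_d (Suc n) -` {a<..} \<inter> space ?L) = ?B"
        using True unfolding unit_ball_d_def by (auto intro: less_le_trans)
      thus ?thesis using True by (simp add: vol_ball V_def)
    next
      case a0: False
      show ?thesis
      proof (cases "a < 1")
        case False
        hence "?B \<inter> (enorm_d (Suc n) -` {a<..} \<inter> space ?L) = {}"
          unfolding unit_ball_d_def by auto
        thus ?thesis using False by simp
      next
        case True
        have "?B \<inter> (enorm_d (Suc n) -` {a<..} \<inter> space ?L) = ?B - {x \<in> space ?L. enorm_d (Suc n) x \<le> a}"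
          unfolding unit_ball_d_def by auto
        moreover have "emeasure ?L (?B - {x \<in> space ?L. enorm_d (Suc n) x \<le> a}) =
            emeasure ?L ?B - emeasure ?L {x \<in> space ?L. enorm_d (Suc n) x \<le> a}"
          using True a0 by (intro emeasure_Diff) (auto simp: ball_r_vol enorm_sets ball_sets unit_ball_d_def)
        moreover have "emeasure ?L ?B - emeasure ?L {x \<in> space ?L. enorm_d (Suc n) x \<le> a} =
            ennreal (V - V * a ^ Suc n)"
          using True a0 V0 by (simp add: vol_ball ball_r_vol V_def ennreal_minus)
        ultimately show ?thesis using True a0 by (simp add: algebra_simps)
      qed
    qed
    finally show ?thesis .
  qed
  have val2: "emeasure (density lborel (radd n)) {a<..} = (if a < 1 then ennreal (V * (1 - (max a 0) ^ Suc n)) else 0)" for a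
  proof -
    have "emeasure (density lborel (radd n)) {a<..} = (\<integral>\<^sup>+s. radd n s * indicator {a<..} s \<partial>lborel)"
      by (subst emeasure_density) auto
    also have "\<dots> = (if a < 1 then ennreal (V * (1 - (max a 0) ^ Suc n)) else 0)"
    proof (cases "a < 1")
      case False
      have z: "radd n s * indicator {a<..} s = 0" for s
        using False by (cases "s \<in> {0..1}") (auto simp: radd_def indicator_def)
      have "(\<integral>\<^sup>+s. radd n s * indicator {a<..} s \<partial>lborel) = 0"
        by (simp add: z)
      thus ?thesis using False by simp
    next
      case True
      define m where "m = max a 0"
      have m: "0 \<le> m" "m \<le> 1" using True unfolding m_def by auto
      have "(\<integral>\<^sup>+s. radd n s * indicator {a<..} s \<partial>lborel) = (\<integral>\<^sup>+s. ennreal (V * real (Suc n) * s ^ n) * indicator {m..1} s \<partial>lborel)"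
      proof (intro nn_integral_cong_AE)
        show "AE s in lborel. radd n s * indicator {a<..} s = ennreal (V * real (Suc n) * s ^ n) * indicator {m..1} s"
          using AE_lborel_singleton[of m]
        proof eventually_elim
          case (elim s)
          have iff: "(s \<in> {0..1} \<and> s \<in> {a<..}) \<longleftrightarrow> s \<in> {m..1}"
            using elim True unfolding m_def by (cases "a < 0") auto
          have "radd n s * indicator {a<..} s = ennreal (V * real (Suc n) * s ^ n) * (indicator {0..1} s * indicator {a<..} s)"
            unfolding radd_def V_def by (simp add: mult_ac)
          also have "indicator {0..1} s * indicator {a<..} s = (indicator {m..1} s :: ennreal)"
          proof (cases "s \<in> {m..1}")
            case True
            hence "s \<in> {0..1}" "s \<in> {a<..}" using iff by blast+
            thus ?thesis using True by simp
          next
            case False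
            hence "s \<notin> {0..1} \<or> s \<notin> {a<..}" using iff by blast
            thus ?thesis using False by auto
          qed
          finally show ?case .
        qed
      qed
      also have "\<dots> = ennreal (V * (1 - m ^ Suc n))"
        by (rule nn_integral_has_integral_lebesgue'[OF _ pow_integral[OF m]]) (use V0 m in auto)
      finally show ?thesis using True unfolding m_def by simp
    qed
    finally show ?thesis .
  qed
  show "emeasure (distr (density ?L (indicator ?B)) borel (enorm_d (Suc n))) {a<..} = emeasure (density lborel (radd n)) {a<..}" for a
    unfolding val val2 ..
  show "emeasure (distr (density ?L (indicator ?B)) borel (enorm_d (Suc n))) {a<..} < \<infinity>" for a
    unfolding val by (cases "a < 1") auto
qed (rule sets_distr, simp only: sets_density sets_lborel)

lemma radial:
  assumes g: "g \<in> borel_measurable borel"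
  shows "(\<integral>\<^sup>+x. g (enorm_d (Suc n) x) * indicator (unit_ball_d (Suc n)) x \<partial>lebesgue_d (Suc n)) =
         (\<integral>\<^sup>+s. g s * radd n s \<partial>lborel)"
proof -
  let ?L = "lebesgue_d (Suc n)"
  let ?B = "unit_ball_d (Suc n)"
  have "(\<integral>\<^sup>+x. g (enorm_d (Suc n) x) * indicator ?B x \<partial>?L) = (\<integral>\<^sup>+x. indicator ?B x * g (enorm_d (Suc n) x) \<partial>?L)"
    by (simp add: mult.commute)
  also have "\<dots> = (\<integral>\<^sup>+x. g (enorm_d (Suc n) x) \<partial>density ?L (indicator ?B))"
    using g by (subst nn_integral_density) auto
  also have "\<dots> = (\<integral>\<^sup>+s. g s \<partial>distr (density ?L (indicator ?B)) borel (enorm_d (Suc n)))"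
    using g by (subst nn_integral_distr) auto
  also have "\<dots> = (\<integral>\<^sup>+s. g s \<partial>density lborel (radd n))" unfolding radial_measure ..
  also have "\<dots> = (\<integral>\<^sup>+s. radd n s * g s \<partial>lborel)"
    using g by (subst nn_integral_density) auto
  finally show ?thesis by (simp add: mult.commute)
qed



lemma diff_norm_meas: "(\<lambda>p. enorm_d d (\<lambda>i. fst p i - snd p i)) \<in> borel_measurable (lebesgue_d d \<Otimes>\<^sub>M lebesgue_d d)"
  unfolding enorm_d_def lebesgue_d_def by measurable

lemma ubv_Suc: "unit_ball_vol (real n) * Beta (1/2) (real n / 2 + 1) = unit_ball_vol (real (Suc n))"
  by (auto simp: unit_ball_vol_def Beta_def Gamma_eq_zero_iff field_simps
          Gamma_one_half_real powr_half_sqrt [symmetric] powr_add [symmetric])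

definition GG :: "nat \<Rightarrow> real \<Rightarrow> real" where
  "GG n e = 2 * unit_ball_vol (real n) * (KK n 1 - KK n (max 0 (min 1 (e / 2)))) / unit_ball_vol (real (Suc n))"

lemma GG_cont: "continuous_on UNIV (GG n)"
proof -
  have "continuous_on UNIV (\<lambda>e::real. KK n (max 0 (min 1 (e / 2))))"
    by (rule continuous_on_compose2[OF KK_cont]) (auto intro!: continuous_intros)
  moreover have "unit_ball_vol (real (Suc n)) \<noteq> 0" using unit_ball_vol_pos[of "real (Suc n)"] by linarith
  ultimately show ?thesis unfolding GG_def by (intro continuous_intros) auto
qed

lemma GG_meas[measurable]: "(\<lambda>e. ennreal (GG n e)) \<in> borel_measurable borel"
  using borel_measurable_continuous_onI[OF GG_cont[of n]] by measurable

lemma w_formula: "w (Suc n) = 3/2 * qq n"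
proof -
  define d where "d = Suc n"
  define L where "L = lebesgue_d d"
  define B where "B = unit_ball_d d"
  define U where "U = unif_ball d"
  define V where "V = unit_ball_vol (real (Suc n))"
  define v where "v = unit_ball_vol (real n)"
  have V0: "V > 0" "v > 0" unfolding V_def v_def by simp_all
  have LB: "emeasure L B = ennreal V" unfolding L_def B_def V_def d_def by (rule vol_ball)
  have Bs: "B \<in> sets L" unfolding L_def B_def by (rule ball_sets)
  have U: "U = uniform_measure L B" unfolding U_def L_def B_def unif_ball_def ..
  have ps: "prob_space U" unfolding U using LB V0 by (intro prob_space_uniform_measure) auto
  interpret U: sigma_finite_measure U using ps by (rule prob_space_imp_sigma_finite)
  define Wset where "Wset = {(x, y) \<in> space (U \<Otimes>\<^sub>M U). enorm_d d (\<lambda>i. x i - y i) \<le> 1}"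
  have sU: "sets (U \<Otimes>\<^sub>M U) = sets (L \<Otimes>\<^sub>M L)" unfolding U by (intro sets_pair_measure_cong) simp_all
  have spU: "space (U \<Otimes>\<^sub>M U) = space (L \<Otimes>\<^sub>M L)" using sU by (rule sets_eq_imp_space_eq)
  have Wm: "Wset \<in> sets (U \<Otimes>\<^sub>M U)"
  proof -
    have "Wset = (\<lambda>p. enorm_d d (\<lambda>i. fst p i - snd p i)) -` {..1} \<inter> space (L \<Otimes>\<^sub>M L)"
      unfolding Wset_def spU by auto
    also have "\<dots> \<in> sets (L \<Otimes>\<^sub>M L)"
      by (rule measurable_sets[OF diff_norm_meas[of d, folded L_def]]) simp
    finally show ?thesis unfolding sU .
  qed
  have "emeasure (U \<Otimes>\<^sub>M U) Wset = (\<integral>\<^sup>+x. emeasure U (Pair x -` Wset) \<partial>U)"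
    by (rule U.emeasure_pair_measure_alt[OF Wm])
  also have "\<dots> = (\<integral>\<^sup>+x. ennreal (GG n (enorm_d d x)) \<partial>U)"
  proof (rule nn_integral_cong_AE)
    have null: "AE x in L. \<not> enorm_d d x \<le> 0"
    proof (rule AE_I')
      show "{x \<in> space L. \<not> \<not> enorm_d d x \<le> 0} \<in> null_sets L"
        using null0[of n] unfolding L_def d_def by (auto simp: null_sets_def enorm_sets)
    qed auto
    have "AE x in U. enorm_d d x > 0"
      unfolding U using Bs null by (intro AE_uniform_measureI) (auto elim!: eventually_mono)
    moreover have "AE x in U. x \<in> B"
      unfolding U using Bs by (intro AE_uniform_measureI) auto
    ultimately show "AE x in U. emeasure U (Pair x -` Wset) = ennreal (GG n (enorm_d d x))"
    proof eventually_elim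
      case (elim x)
      have xs: "x \<in> space L" using elim Bs sets.sets_into_space by blast
      have e1: "enorm_d d x \<le> 1" using elim unfolding B_def unit_ball_d_def by auto
      have "Pair x -` Wset = {y \<in> space L. enorm_d d (\<lambda>i. x i - y i) \<le> 1}"
        using xs unfolding Wset_def spU by (auto simp: space_pair_measure)
      moreover have ys: "{y \<in> space L. enorm_d d (\<lambda>i. x i - y i) \<le> 1} \<in> sets L"
      proof -
        have "(\<lambda>y. enorm_d d (\<lambda>i. x i - y i)) \<in> borel_measurable L"
          using measurable_Pair2[OF diff_norm_meas[of d, folded L_def] xs] by (simp add: comp_def)
        from measurable_sets[OF this, of "{..1}"]
        show ?thesis by (simp add: vimage_def Int_def conj_commute)
      qed
      moreover have "B \<inter> {y \<in> space L. enorm_d d (\<lambda>i. x i - y i) \<le> 1} = {y \<in> B. enorm_d d (\<lambda>i. x i - y i) \<le> 1}"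
        using Bs sets.sets_into_space by blast
      ultimately have "emeasure U (Pair x -` Wset) = emeasure L {y \<in> B. enorm_d d (\<lambda>i. x i - y i) \<le> 1} / emeasure L B"
        unfolding U using Bs by simp
      also have "\<dots> = ennreal (2 * v * (KK n 1 - KK n (enorm_d d x / 2))) / ennreal V"
        unfolding LB unfolding L_def B_def d_def v_def using lens_val elim unfolding B_def d_def by simp
      also have "\<dots> = ennreal (GG n (enorm_d d x))"
      proof -
        have "max 0 (min 1 (enorm_d d x / 2)) = enorm_d d x / 2" using elim e1 by auto
        moreover have "0 \<le> KK n 1 - KK n (enorm_d d x / 2)" using elim e1 by (intro J_nonneg) auto
        ultimately show ?thesis using V0 unfolding GG_def v_def V_def by (simp add: divide_ennreal)
      qed
      finally show ?case .
    qed
  qed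
  also have "\<dots> = (\<integral>\<^sup>+x. ennreal (GG n (enorm_d d x)) * indicator B x \<partial>L) / emeasure L B"
    unfolding U by (rule nn_integral_uniform_measure[OF _ Bs]) (simp add: L_def)
  also have "(\<integral>\<^sup>+x. ennreal (GG n (enorm_d d x)) * indicator B x \<partial>L) = (\<integral>\<^sup>+s. ennreal (GG n s) * radd n s \<partial>lborel)"
    unfolding L_def B_def d_def by (rule radial) simp
  also have "\<dots> = (\<integral>\<^sup>+s. ennreal (2 * v * (real (Suc n) * s ^ n * (KK n 1 - KK n (s/2)))) * indicator {0..1} s \<partial>lborel)"
  proof (rule nn_integral_cong)
    fix s :: real
    show "ennreal (GG n s) * radd n s = ennreal (2 * v * (real (Suc n) * s ^ n * (KK n 1 - KK n (s/2)))) * indicator {0..1} s"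
    proof (cases "s \<in> {0..1}")
      case True
      have mm: "max 0 (min 1 (s / 2)) = s / 2" using True by auto
      have J: "0 \<le> KK n 1 - KK n (s / 2)" using True by (intro J_nonneg) auto
      have r: "radd n s = ennreal (V * real (Suc n) * s ^ n)" using True unfolding radd_def V_def by simp
      have g0: "0 \<le> GG n s" unfolding GG_def mm using J V0 unfolding v_def V_def by simp
      have p0: "0 \<le> V * real (Suc n) * s ^ n" using V0 True by simp
      have "ennreal (GG n s) * radd n s = ennreal (GG n s * (V * real (Suc n) * s ^ n))"
        unfolding r by (rule ennreal_mult[symmetric, OF g0 p0])
      also have "GG n s * (V * real (Suc n) * s ^ n) = 2 * v * (real (Suc n) * s ^ n * (KK n 1 - KK n (s/2)))"
      proof -
        have GGs: "GG n s = 2 * v * (KK n 1 - KK n (s/2)) / V" unfolding GG_def mm V_def v_def ..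
        show ?thesis unfolding GGs using V0 by (simp add: field_simps)
      qed
      finally show ?thesis using True by simp
    qed (simp add: radd_def)
  qed
  also have "\<dots> = ennreal (2 * v * ((3/2) * (KK n 1 - KK n (1/2))))"
  proof (rule nn_integral_has_integral_lebesgue')
    show "((\<lambda>s. 2 * v * (real (Suc n) * s ^ n * (KK n 1 - KK n (s/2)))) has_integral 2 * v * ((3/2) * (KK n 1 - KK n (1/2)))) {0..1}"
      by (rule has_integral_mult_right[OF calc_main])
    fix s :: real assume s: "s \<in> {0..1}"
    have J: "0 \<le> KK n 1 - KK n (s / 2)" using s by (intro J_nonneg) auto
    show "0 \<le> 2 * v * (real (Suc n) * s ^ n * (KK n 1 - KK n (s/2)))" using s J V0 by simp
  qed
  finally have "emeasure (U \<Otimes>\<^sub>M U) Wset = ennreal (2 * v * ((3/2) * (KK n 1 - KK n (1/2)))) / ennreal V"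
    unfolding LB .
  also have "\<dots> = ennreal (2 * v * ((3/2) * (KK n 1 - KK n (1/2))) / V)"
  proof (rule divide_ennreal)
    show "0 \<le> 2 * v * ((3/2) * (KK n 1 - KK n (1/2)))" using V0 J_nonneg[of "1/2" n] by simp
  qed (use V0 in simp)
  finally have em: "emeasure (U \<Otimes>\<^sub>M U) Wset = ennreal (2 * v * ((3/2) * (KK n 1 - KK n (1/2))) / V)" .
  have Jh: "0 \<le> KK n 1 - KK n (1/2)" by (intro J_nonneg) auto
  have "w (Suc n) = 2 * v * ((3/2) * (KK n 1 - KK n (1/2))) / V"
    unfolding w_def d_def[symmetric] U_def[symmetric] Wset_def[symmetric] measure_def em
    using V0 Jh by simp
  also have "V = v * (2 * (KK n 1 - KK n 0))"
    unfolding V_def v_def ubv_Suc[symmetric] Beta_KK ..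
  also have "2 * v * ((3/2) * (KK n 1 - KK n (1/2))) / (v * (2 * (KK n 1 - KK n 0))) = 3/2 * qq n"
    unfolding qq_def using V0 J0_pos[of n] by (simp add: field_simps)
  finally show ?thesis .
qed

theorem lemma1:
  shows "(\<forall>d\<ge>1. w d = 3 / 2 * measure (beta_distr (1/2) ((real d + 1) / 2)) {1/4..})
         \<and> (\<forall>d\<ge>1. w (Suc d) < w d)
         \<and> (w \<longlonglongrightarrow> 0)"
proof (intro conjI allI impI)
  fix d :: nat assume "d \<ge> 1"
  then obtain n where d: "d = Suc n" by (cases d) auto
  show "w d = 3 / 2 * measure (beta_distr (1/2) ((real d + 1) / 2)) {1/4..}"
    unfolding d w_formula beta_meas qq_def ..
next
  fix d :: nat assume "d \<ge> 1"
  then obtain n where d: "d = Suc n" by (cases d) auto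
  show "w (Suc d) < w d" unfolding d w_formula using qq_mono[of n] by simp
next
  have "(\<lambda>n. 3/2 * qq n) \<longlonglongrightarrow> 3/2 * 0" by (intro tendsto_intros qq_lim)
  hence "(\<lambda>n. w (Suc n)) \<longlonglongrightarrow> 0" unfolding w_formula by simp
  thus "w \<longlonglongrightarrow> 0" by (rule filterlim_sequentially_Suc[THEN iffD1])
qed

end
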